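(* Let $S_n,T_n,z_0$ be such that $R_n(1)=z_0$, $R_n(z_0)=1$, $R_n'(1)R_n'(z_0)=1$ and $S_n/s^\nu\to\mu$, $T_n/s^\nu\to(d_1d_n-1)\mu$, $z_0/s^\nu\to d_1d_n\mu$ as $s\to0^+$. Let $\psi(z)=z_0/z$ and $\widehat R_n=\psi\circ R_n\circ\psi^{-1}$. Then, as $s\to0^+$, $R_n\circ R_n$ converges to $h_{d_1,d_n}(z)=\frac{(d_1d_n)^{d_n}z^{d_1d_n}}{(1+(d_1d_n-1)z^{d_1})^{d_n}}$ and $\widehat R_n\circ\widehat R_n$ converges to $h_{d_1d_n}(z)=\frac{d_1d_nz^{d_1d_n}}{1+(d_1d_n-1)z^{d_1d_n}}$, both locally uniformly on $\widehat{\mathbb{C}}\setminus\{0\}$.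
   Context: $n\ge3$ odd, $d_1,\dots,d_n$ positive integers with $\sum1/d_i<1$, $d_{\max}=\max_id_i$, $D_i=d_i+d_{i+1}$, $c_1=(d_{\max}^2s)^{1/d_1}$, $c_i=s^{1/d_i}c_{i-1}$, $R_n(z)=\frac{S_n}{z^{d_n}}\prod_{i=1}^{n-1}(z^{D_i}-c_i^{D_i})^{(-1)^i}+T_n$, $\nu=\frac{d_n}{d_n-1}\sum_{i=1}^{n-1}\frac1{d_i}$, $\mu=(d_1d_n)^{-d_n/(d_n-1)}d_{\max}^{2(d_n-d_1)/(d_1(d_n-1))}$. Such $S_n,T_n,z_0$ exist for small $s$. *)

theory Defs
  imports Complex_Main
begin

text \<open>The Riemann sphere is modelled as complex option, None being the point at infinity.\<close>

fun cdist :: "complex option \<Rightarrow> complex option \<Rightarrow> real" where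
  "cdist (Some a) (Some b) = 2 * norm (a - b) / (sqrt (1 + (norm a)^2) * sqrt (1 + (norm b)^2))"
| "cdist (Some a) None = 2 / sqrt (1 + (norm a)^2)"
| "cdist None (Some b) = 2 / sqrt (1 + (norm b)^2)"
| "cdist None None = 0"

definition sph_ext :: "(complex \<Rightarrow> complex) \<Rightarrow> complex option \<Rightarrow> complex option" where
  "sph_ext f w = (case w of
      Some z \<Rightarrow> (if \<exists>L. (f \<longlongrightarrow> L) (at z) then Some (Lim (at z) f) else None)
    | None \<Rightarrow> (if \<exists>L. (f \<longlongrightarrow> L) at_infinity then Some (Lim at_infinity f) else None))"

definition dmax :: "(nat \<Rightarrow> nat) \<Rightarrow> nat \<Rightarrow> nat" where
  "dmax d n = Max (d ` {1..n})"

definition DD :: "(nat \<Rightarrow> nat) \<Rightarrow> nat \<Rightarrow> nat" where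
  "DD d i = d i + d (Suc i)"

fun cc :: "(nat \<Rightarrow> nat) \<Rightarrow> nat \<Rightarrow> real \<Rightarrow> nat \<Rightarrow> real" where
  "cc d n s 0 = 0"
| "cc d n s (Suc 0) = (real (dmax d n) ^ 2 * s) powr (1 / real (d 1))"
| "cc d n s (Suc (Suc k)) = s powr (1 / real (d (Suc (Suc k)))) * cc d n s (Suc k)"

definition Rfun :: "(nat \<Rightarrow> nat) \<Rightarrow> nat \<Rightarrow> real \<Rightarrow> real \<Rightarrow> real \<Rightarrow> complex \<Rightarrow> complex" where
  "Rfun d n S T s z =
     complex_of_real S / z ^ d n
       * (\<Prod>i\<in>{1..n-1}. (z ^ DD d i - complex_of_real (cc d n s i ^ DD d i)) powi ((-1) ^ i))
     + complex_of_real T"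

definition nu :: "(nat \<Rightarrow> nat) \<Rightarrow> nat \<Rightarrow> real" where
  "nu d n = real (d n) / (real (d n) - 1) * (\<Sum>i\<in>{1..n-1}. 1 / real (d i))"

definition mu :: "(nat \<Rightarrow> nat) \<Rightarrow> nat \<Rightarrow> real" where
  "mu d n = (real (d 1) * real (d n)) powr (- real (d n) / (real (d n) - 1))
     * real (dmax d n) powr (2 * (real (d n) - real (d 1)) / (real (d 1) * (real (d n) - 1)))"

definition h2 :: "nat \<Rightarrow> nat \<Rightarrow> complex \<Rightarrow> complex" where
  "h2 a b z = (of_nat (a * b)) ^ b * z ^ (a * b) / (1 + (of_nat (a * b) - 1) * z ^ a) ^ b"

definition h1 :: "nat \<Rightarrow> complex \<Rightarrow> complex" where
  "h1 k z = of_nat k * z ^ k / (1 + (of_nat k - 1) * z ^ k)"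

text \<open>psi(z) = z0/z on the Riemann sphere (an involution, so psi^-1 = psi).\<close>
definition psi :: "real \<Rightarrow> complex option \<Rightarrow> complex option" where
  "psi z0 = sph_ext (\<lambda>z. complex_of_real z0 / z)"

end

theory Submission
  imports Defs
begin


lemma prod_bound:
  fixes q :: "'i \<Rightarrow> complex"
  assumes "finite I" "\<forall>i\<in>I. norm (q i - 1) \<le> \<delta>" "0 \<le> \<delta>"
  shows "norm ((\<Prod>i\<in>I. q i) - 1) \<le> (1+\<delta>)^card I - 1"
using assms proof (induction I rule: finite_induct)
  case empty then show ?case by simp
next
  case (insert x F)
  let ?p = "\<Prod>i\<in>F. q i"
  have IH: "norm (?p - 1) \<le> (1+\<delta>)^card F - 1" using insert by auto
  have qx: "norm (q x - 1) \<le> \<delta>" using insert by auto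
  have nq: "norm (q x) \<le> 1 + \<delta>"
    using norm_triangle_ineq[of "q x - 1" 1] qx by simp
  have ge: "0 \<le> (1+\<delta>)^card F - 1" using insert(5) by simp
  have "(\<Prod>i\<in>insert x F. q i) - 1 = q x * (?p - 1) + (q x - 1)" using insert by (simp add: algebra_simps)
  also have "norm \<dots> \<le> norm (q x) * norm (?p - 1) + norm (q x - 1)"
    by (metis norm_mult norm_triangle_ineq)
  also have "\<dots> \<le> (1+\<delta>) * ((1+\<delta>)^card F - 1) + \<delta>"
    by (intro add_mono mult_mono nq IH qx) (use insert(5) in auto)
  also have "\<dots> = (1+\<delta>)^card (insert x F) - 1" using insert by (simp add: algebra_simps)
  finally show ?case .
qed

lemma factor_bound:
  fixes a :: complex
  assumes e: "e = 1 \<or> e = -1" and na: "norm a \<le> \<eta>" and eta: "\<eta> \<le> 1/2"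
  shows "norm ((1 - a) powi e - 1) \<le> 2 * \<eta>"
  using e
proof
  assume e1: "e = 1"
  have "norm a \<le> 2*\<eta>" using na norm_ge_zero[of a] by linarith
  then show ?thesis using e1 by simp
next
  assume e1: "e = -1"
  have n1: "norm (1 - a) \<ge> 1/2" using norm_triangle_ineq2[of 1 a] na eta by simp
  hence nz: "1 - a \<noteq> 0" by auto
  have "(1 - a) powi e - 1 = a / (1 - a)" using e1 nz by (simp add: power_int_minus field_simps)
  also have "norm \<dots> = norm a / norm (1 - a)" by (simp add: norm_divide)
  also have "\<dots> \<le> \<eta> / (1/2)" by (rule frac_le) (use na n1 order_trans[OF norm_ge_zero na] in auto)
  finally show ?thesis by simp
qed

lemma prod_small:
  fixes x :: "'i \<Rightarrow> 's \<Rightarrow> real" and e :: "'i \<Rightarrow> int"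
  assumes I: "finite I" and ex: "\<forall>i\<in>I. e i = 1 \<or> e i = -1"
    and lim: "\<forall>i\<in>I. ((x i) \<longlongrightarrow> 0) F" and eps: "\<epsilon> > 0"
  shows "\<forall>\<^sub>F s in F. \<forall>a::'i\<Rightarrow>complex. (\<forall>i\<in>I. norm (a i) \<le> x i s) \<longrightarrow>
            norm ((\<Prod>i\<in>I. (1 - a i) powi e i) - 1) \<le> \<epsilon>"
proof -
  define \<eta> where "\<eta> s = (\<Sum>i\<in>I. \<bar>x i s\<bar>)" for s
  have "(\<eta> \<longlongrightarrow> (\<Sum>i\<in>I. \<bar>0::real\<bar>)) F" unfolding \<eta>_def
    by (intro tendsto_sum tendsto_rabs) (use lim in auto)
  hence e0: "(\<eta> \<longlongrightarrow> 0) F" by simp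
  hence "((\<lambda>s. (1 + 2 * \<eta> s)^card I - 1) \<longlongrightarrow> (1 + 2 * 0)^card I - 1) F"
    by (intro tendsto_intros)
  hence "((\<lambda>s. (1 + 2 * \<eta> s)^card I - 1) \<longlongrightarrow> 0) F" by simp
  hence ev1: "\<forall>\<^sub>F s in F. (1 + 2 * \<eta> s)^card I - 1 < \<epsilon>" using eps by (rule order_tendstoD)
  have ev2: "\<forall>\<^sub>F s in F. \<eta> s < 1/2" using e0 by (rule order_tendstoD) simp
  show ?thesis using ev1 ev2
  proof eventually_elim
    case (elim s)
    show ?case
    proof (intro allI impI)
      fix a :: "'i \<Rightarrow> complex" assume ha: "\<forall>i\<in>I. norm (a i) \<le> x i s"
      have "\<forall>i\<in>I. norm (a i) \<le> \<eta> s"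
      proof
        fix i assume i: "i \<in> I"
        have "norm (a i) \<le> \<bar>x i s\<bar>" using ha i by force
        also have "\<dots> \<le> \<eta> s" unfolding \<eta>_def by (rule member_le_sum) (use i I in auto)
        finally show "norm (a i) \<le> \<eta> s" .
      qed
      hence "\<forall>i\<in>I. norm ((1 - a i) powi e i - 1) \<le> 2 * \<eta> s"
        using factor_bound ex elim(2) by fastforce
      moreover have "0 \<le> 2 * \<eta> s" unfolding \<eta>_def by (simp add: sum_nonneg)
      ultimately have "norm ((\<Prod>i\<in>I. (1 - a i) powi e i) - 1) \<le> (1 + 2 * \<eta> s)^card I - 1"
        using prod_bound[OF I, of "\<lambda>i. (1 - a i) powi e i" "2 * \<eta> s"] by blast
      thus "norm ((\<Prod>i\<in>I. (1 - a i) powi e i) - 1) \<le> \<epsilon>" using elim(1) by linarith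
    qed
  qed
qed

lemma ZB:
  fixes f g :: "'p \<Rightarrow> complex"
  assumes "(f \<longlongrightarrow> 0) G" "\<forall>\<^sub>F p in G. norm (g p) \<le> M"
  shows "((\<lambda>p. f p * g p) \<longlongrightarrow> 0) G"
  using assms(1)
proof (rule tendsto_0_le[where K=M])
  show "\<forall>\<^sub>F p in G. norm (f p * g p) \<le> norm (f p) * M"
    using assms(2) by eventually_elim (simp add: norm_mult mult_left_mono)
qed

lemma PD:
  fixes f g :: "'p \<Rightarrow> complex"
  assumes "((\<lambda>p. f p - g p) \<longlongrightarrow> 0) G" "\<forall>\<^sub>F p in G. norm (f p) \<le> M \<and> norm (g p) \<le> M"
  shows "((\<lambda>p. f p ^ m - g p ^ m) \<longlongrightarrow> 0) G"
proof -
  have "((\<lambda>p. (f p - g p) * (\<Sum>i<m. g p ^ (m - Suc i) * f p ^ i)) \<longlongrightarrow> 0) G"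
  proof (rule ZB[OF assms(1)])
    show "\<forall>\<^sub>F p in G. norm (\<Sum>i<m. g p ^ (m - Suc i) * f p ^ i) \<le> real m * M ^ (m - 1)"
      using assms(2)
    proof eventually_elim
      case (elim p)
      have M0: "0 \<le> M" using elim norm_ge_zero[of "f p"] by linarith
      have "norm (\<Sum>i<m. g p ^ (m - Suc i) * f p ^ i) \<le> (\<Sum>i<m. norm (g p ^ (m - Suc i) * f p ^ i))"
        by (rule norm_sum)
      also have "\<dots> \<le> (\<Sum>i<m. M ^ (m - 1))"
      proof (rule sum_mono)
        fix i assume i: "i \<in> {..<m}"
        have "norm (g p ^ (m - Suc i) * f p ^ i) = norm (g p) ^ (m - Suc i) * norm (f p) ^ i"
          by (simp add: norm_mult norm_power)
        also have "\<dots> \<le> M ^ (m - Suc i) * M ^ i"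
          by (intro mult_mono power_mono) (use elim M0 in auto)
        also have "\<dots> = M ^ (m - 1)" using i by (simp add: power_add[symmetric])
        finally show "norm (g p ^ (m - Suc i) * f p ^ i) \<le> M ^ (m - 1)" .
      qed
      also have "\<dots> = real m * M ^ (m - 1)" by simp
      finally show ?case .
    qed
  qed
  thus ?thesis by (simp add: power_diff_sumr2)
qed

fun rec :: "complex option \<Rightarrow> complex" where
  "rec None = 0" | "rec (Some a) = inverse a"

lemma rec_inv: "rec x = c \<Longrightarrow> c \<noteq> 0 \<Longrightarrow> x = Some (inverse c)"
  by (cases x) auto

lemma cdist_rec:
  assumes "x \<noteq> Some 0" "y \<noteq> Some 0"
  shows "cdist x y \<le> 2 * norm (rec x - rec y)"
proof (cases x)
  case None note x = this
  show ?thesis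
  proof (cases y)
    case None then show ?thesis using x by simp
  next
    case (Some b)
    have b: "b \<noteq> 0" using assms Some by auto
    have "norm b \<le> sqrt (1 + (norm b)^2)" by (rule real_le_rsqrt) simp
    hence "2 / sqrt (1 + (norm b)^2) \<le> 2 / norm b" using b by (intro divide_left_mono) (auto intro!: mult_pos_pos add_pos_nonneg)
    then show ?thesis using x Some b by (simp add: norm_inverse divide_inverse)
  qed
next
  case (Some a) note x = this
  have a: "a \<noteq> 0" using assms Some by auto
  have sa: "norm a \<le> sqrt (1 + (norm a)^2)" by (rule real_le_rsqrt) simp
  show ?thesis
  proof (cases y)
    case None
    have "2 / sqrt (1 + (norm a)^2) \<le> 2 / norm a" using a sa by (intro divide_left_mono) (auto intro!: mult_pos_pos add_pos_nonneg)
    then show ?thesis using x None a by (simp add: norm_inverse divide_inverse)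
  next
    case (Some b)
    have b: "b \<noteq> 0" using assms Some by auto
    have sb: "norm b \<le> sqrt (1 + (norm b)^2)" by (rule real_le_rsqrt) simp
    have "2 * norm (a - b) / (sqrt (1 + (norm a)^2) * sqrt (1 + (norm b)^2))
          \<le> 2 * norm (a - b) / (norm a * norm b)"
      using a b sa sb by (intro divide_left_mono mult_mono) (auto intro!: mult_pos_pos add_pos_nonneg)
    also have "\<dots> = 2 * norm (inverse a - inverse b)"
    proof -
      have "inverse a - inverse b = (b - a) / (a * b)" using a b by (simp add: field_simps)
      hence "norm (inverse a - inverse b) = norm (a - b) / (norm a * norm b)"
        by (simp add: norm_divide norm_mult norm_minus_commute)
      thus ?thesis by simp
    qed
    finally show ?thesis using x Some by simp
  qed
qed




locale Lc =
  fixes d :: "nat \<Rightarrow> nat" and n :: nat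
  assumes n3: "n \<ge> 3" and nodd: "odd n" and dpos: "\<forall>i\<in>{1..n}. d i > 0"
    and dsum: "(\<Sum>i\<in>{1..n}. 1 / real (d i)) < 1"
begin

lemma d_ge2: assumes "i \<in> {1..n}" shows "d i \<ge> 2"
proof (rule ccontr)
  assume "\<not> d i \<ge> 2"
  hence "d i = 1" using dpos assms by force
  hence "1 / real (d i) = 1" by simp
  moreover have "1 / real (d i) \<le> (\<Sum>i\<in>{1..n}. 1 / real (d i))"
    by (rule member_le_sum) (use assms in auto)
  ultimately show False using dsum by simp
qed

lemma d1: "d 1 \<ge> 2" using d_ge2 n3 by auto
lemma dn: "d n \<ge> 2" using d_ge2 n3 by auto

lemma dmax_ge: "dmax d n \<ge> 2"
proof -
  have "d 1 \<le> dmax d n" unfolding dmax_def by (rule Max_ge) (use n3 in auto)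
  thus ?thesis using d1 by simp
qed

definition "esum i = (\<Sum>j\<in>{1..i}. 1 / real (d j))"
definition "Acc = (real (dmax d n)^2) powr (1 / real (d 1))"

lemma Acc_pos: "Acc > 0" unfolding Acc_def using dmax_ge by simp

lemma cc_closed: "0 < s \<Longrightarrow> cc d n s (Suc j) = Acc * s powr esum (Suc j)"
proof (induction j)
  case 0
  have "cc d n s (Suc 0) = (real (dmax d n)^2) powr (1 / real (d 1)) * s powr (1 / real (d 1))"
    using 0 by (simp add: powr_mult)
  then show ?case unfolding Acc_def esum_def by simp
next
  case (Suc j)
  have "cc d n s (Suc (Suc j)) = s powr (1 / real (d (Suc (Suc j)))) * (Acc * s powr esum (Suc j))"
    using Suc by simp
  also have "\<dots> = Acc * s powr (esum (Suc j) + 1 / real (d (Suc (Suc j))))"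
    by (simp add: powr_add)
  also have "esum (Suc j) + 1 / real (d (Suc (Suc j))) = esum (Suc (Suc j))"
    unfolding esum_def by (simp add: sum.cl_ivl_Suc add.commute)
  finally show ?case .
qed

lemma esum_pos: "1 \<le> i \<Longrightarrow> esum i > 0"
proof -
  assume i: "1 \<le> i"
  have "1 / real (d 1) \<le> esum i" unfolding esum_def by (rule member_le_sum) (use i in auto)
  moreover have "1 / real (d 1) > 0" using d1 by simp
  ultimately show ?thesis by linarith
qed

lemma cc_pos: "0 < s \<Longrightarrow> 1 \<le> i \<Longrightarrow> cc d n s i > 0"
  using cc_closed[of s "i - 1"] Acc_pos by simp

definition "sig s = s powr nu d n"

lemma nu_gt: assumes "1 \<le> i" "i \<le> n - 1" shows "nu d n - esum i > 0"
proof -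
  have "esum i \<le> esum (n - 1)" unfolding esum_def
    by (rule sum_mono2) (use assms in auto)
  have pos: "esum (n - 1) > 0" using esum_pos n3 by simp
  have "nu d n = real (d n) / (real (d n) - 1) * esum (n - 1)" unfolding nu_def esum_def by simp
  moreover have "real (d n) / (real (d n) - 1) > 1" using dn by (simp add: field_simps)
  ultimately have "nu d n > esum (n - 1)" using pos
    mult_strict_right_mono[of 1 "real (d n) / (real (d n) - 1)" "esum (n - 1)"] by simp
  thus ?thesis using \<open>esum i \<le> esum (n - 1)\<close> by simp
qed

lemma nu_pos: "nu d n > 0"
proof -
  have "nu d n - esum 1 > 0" by (rule nu_gt) (use n3 in auto)
  thus ?thesis using esum_pos[of 1] by simp
qed

lemma powr_to0: "p > 0 \<Longrightarrow> ((\<lambda>s::real. s powr p) \<longlongrightarrow> 0) (at_right 0)"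
  by (rule tendsto_zero_powrI) (auto intro!: tendsto_ident_at eventually_at_rightI[of 0 1])

lemma sig_to0: "(sig \<longlongrightarrow> 0) (at_right 0)"
  unfolding sig_def by (rule powr_to0[OF nu_pos])

lemma ev_pos: "\<forall>\<^sub>F s in at_right (0::real). s > 0"
  by (rule eventually_at_right_less)

lemma cc_to0: assumes "1 \<le> i" shows "((\<lambda>s. cc d n s i) \<longlongrightarrow> 0) (at_right 0)"
proof -
  have "((\<lambda>s. Acc * s powr esum i) \<longlongrightarrow> Acc * 0) (at_right 0)"
    by (intro tendsto_intros powr_to0 esum_pos assms)
  moreover have "\<forall>\<^sub>F s in at_right 0. Acc * s powr esum i = cc d n s i"
    using ev_pos by eventually_elim (use cc_closed[of _ "i - 1"] assms in auto)
  ultimately show ?thesis by (simp add: tendsto_cong)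
qed

lemma ratio_to0: assumes "1 \<le> i" "i \<le> n - 1"
  shows "((\<lambda>s. sig s / cc d n s i) \<longlongrightarrow> 0) (at_right 0)"
proof -
  have "((\<lambda>s. s powr (nu d n - esum i) / Acc) \<longlongrightarrow> 0 / Acc) (at_right 0)"
    by (intro tendsto_intros powr_to0 nu_gt assms) (use Acc_pos in simp)
  moreover have "\<forall>\<^sub>F s in at_right 0. s powr (nu d n - esum i) / Acc = sig s / cc d n s i"
    using ev_pos by eventually_elim
      (use cc_closed[of _ "i - 1"] assms Acc_pos in \<open>auto simp: sig_def powr_diff field_simps\<close>)
  ultimately show ?thesis by (simp add: tendsto_cong)
qed

lemma tele: "(\<Sum>i\<in>{1..m}. int (DD d i) * (-1)^i) = - int (d 1) + (-1)^m * int (d (Suc m))"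
proof (induction m)
  case 0 then show ?case by simp
next
  case (Suc m)
  have "(\<Sum>i\<in>{1..Suc m}. int (DD d i) * (-1)^i) = (\<Sum>i\<in>{1..m}. int (DD d i) * (-1)^i) + int (DD d (Suc m)) * (-1)^Suc m"
    by (simp add: sum.cl_ivl_Suc)
  also have "\<dots> = - int (d 1) + (-1)^Suc m * int (d (Suc (Suc m)))"
    using Suc by (simp add: DD_def algebra_simps)
  finally show ?case .
qed

lemma tele_n: "(\<Sum>i\<in>{1..n-1}. int (DD d i) * (-1)^i) = int (d n) - int (d 1)"
proof -
  have "even (n - 1)" using nodd n3 by simp
  thus ?thesis using tele[of "n - 1"] n3 by simp
qed

lemma DD_pos: "i \<in> {1..n-1} \<Longrightarrow> DD d i > 0" using d_ge2[of i] unfolding DD_def by fastforce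

end



lemma sph_cont: "isCont f z \<Longrightarrow> sph_ext f (Some z) = Some (f z)"
  unfolding sph_ext_def isCont_def by (auto intro: tendsto_Lim)

lemma sph_nolim: "\<not> (\<exists>L. (f \<longlongrightarrow> L) (at z)) \<Longrightarrow> sph_ext f (Some z) = None"
  unfolding sph_ext_def by auto

lemma at_infinity_nb: "(at_infinity :: complex filter) \<noteq> bot"
proof
  assume "(at_infinity :: complex filter) = bot"
  hence "eventually (\<lambda>x::complex. False) at_infinity" by simp
  then obtain b where "\<forall>x::complex. b \<le> norm x \<longrightarrow> False" unfolding eventually_at_infinity by blast
  thus False using norm_of_real[of "\<bar>b\<bar>"] by (metis abs_ge_self abs_abs)
qed

lemma sph_inf: "(f \<longlongrightarrow> L) at_infinity \<Longrightarrow> sph_ext f None = Some L"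
  unfolding sph_ext_def using at_infinity_nb by (auto intro: tendsto_Lim)

lemma ev_inf_nz: "\<forall>\<^sub>F w in at_infinity. (w::complex) \<noteq> 0"
  unfolding eventually_at_infinity by (rule exI[of _ 1]) auto

lemma prod_power_int:
  fixes x :: complex
  assumes "x \<noteq> 0" "finite I"
  shows "(\<Prod>i\<in>I. x powi f i) = x powi (\<Sum>i\<in>I. f i)"
  using assms(2) by (induction I rule: finite_induct) (auto simp: power_int_add assms(1))

lemma pow_ne: fixes w :: complex
  assumes "norm w \<noteq> c" "0 \<le> c" "D > 0" shows "w ^ D \<noteq> complex_of_real (c ^ D)"
proof
  assume "w ^ D = complex_of_real (c ^ D)"
  hence "norm w ^ D = c ^ D" using assms(2) by (metis norm_of_real norm_power abs_of_nonneg zero_le_power)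
  hence "norm w = c" using assms(2,3) power_eq_imp_eq_base by (metis norm_ge_zero)
  thus False using assms(1) by simp
qed

lemma neg1pow: "((-1::int)^i = 1) \<or> ((-1::int)^i = -1)"
  by (cases "even i") auto

context Lc begin

definition "C s i = complex_of_real (cc d n s i ^ DD d i)"
definition "Qo s w = (\<Prod>i\<in>{1..n-1}. (1 - C s i / w ^ DD d i) powi ((-1)^i))"
definition "Qi s w = (\<Prod>i\<in>{1..n-1}. (1 - w ^ DD d i / C s i) powi ((-1)^i))"
definition "P0 s = (\<Prod>i\<in>{1..n-1}. (- C s i) powi ((-1)^i))"

lemma C_nz: "0 < s \<Longrightarrow> i \<in> {1..n-1} \<Longrightarrow> C s i \<noteq> 0"
  unfolding C_def using cc_pos[of s i] by auto

lemma P0_nz: "0 < s \<Longrightarrow> P0 s \<noteq> 0"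
  unfolding P0_def using C_nz by (auto simp: prod_zero_iff)

lemma F2: assumes s: "0 < s"
  shows "Rfun d n S T s w = of_real S * P0 s * Qi s w / w ^ d n + of_real T"
proof -
  have "(\<Prod>i\<in>{1..n-1}. (w ^ DD d i - complex_of_real (cc d n s i ^ DD d i)) powi ((-1) ^ i))
      = (\<Prod>i\<in>{1..n-1}. (- C s i) powi ((-1)^i) * (1 - w ^ DD d i / C s i) powi ((-1)^i))"
  proof (rule prod.cong)
    fix i assume i: "i \<in> {1..n-1}"
    have "w ^ DD d i - complex_of_real (cc d n s i ^ DD d i) = (- C s i) * (1 - w ^ DD d i / C s i)"
      using C_nz[OF s i] by (simp add: C_def field_simps)
    thus "(w ^ DD d i - complex_of_real (cc d n s i ^ DD d i)) powi ((-1) ^ i)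
      = (- C s i) powi ((-1)^i) * (1 - w ^ DD d i / C s i) powi ((-1)^i)"
      by (simp only: power_int_mult_distrib)
  qed simp
  also have "\<dots> = P0 s * Qi s w" unfolding P0_def Qi_def by (rule prod.distrib)
  finally have eq: "(\<Prod>i\<in>{1..n-1}. (w ^ DD d i - complex_of_real (cc d n s i ^ DD d i)) powi ((-1) ^ i))
      = P0 s * Qi s w" .
  show ?thesis unfolding Rfun_def eq by (simp add: divide_inverse ac_simps)
qed

lemma F1: assumes s: "0 < s" and w: "w \<noteq> 0"
  shows "Rfun d n S T s w = of_real S * Qo s w / w ^ d 1 + of_real T"
proof -
  have "(\<Prod>i\<in>{1..n-1}. (w ^ DD d i - complex_of_real (cc d n s i ^ DD d i)) powi ((-1) ^ i))
      = (\<Prod>i\<in>{1..n-1}. w powi (int (DD d i) * (-1)^i) * (1 - C s i / w ^ DD d i) powi ((-1)^i))"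
  proof (rule prod.cong)
    fix i assume i: "i \<in> {1..n-1}"
    have "w ^ DD d i - complex_of_real (cc d n s i ^ DD d i) = w ^ DD d i * (1 - C s i / w ^ DD d i)"
      using w by (simp add: C_def field_simps)
    moreover have "(w ^ DD d i) powi ((-1)^i) = w powi (int (DD d i) * (-1)^i)"
      by (simp add: power_int_mult)
    ultimately show "(w ^ DD d i - complex_of_real (cc d n s i ^ DD d i)) powi ((-1) ^ i)
      = w powi (int (DD d i) * (-1)^i) * (1 - C s i / w ^ DD d i) powi ((-1)^i)"
      by (simp add: power_int_mult_distrib)
  qed simp
  also have "\<dots> = w powi (int (d n) - int (d 1)) * Qo s w"
    unfolding Qo_def prod.distrib prod_power_int[OF w finite_atLeastAtMost] tele_n ..
  also have "w powi (int (d n) - int (d 1)) = w ^ d n / w ^ d 1"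
    using w by (simp add: power_int_diff)
  finally have "(\<Prod>i\<in>{1..n-1}. (w ^ DD d i - complex_of_real (cc d n s i ^ DD d i)) powi ((-1) ^ i))
     = w ^ d n / w ^ d 1 * Qo s w" .
  thus ?thesis unfolding Rfun_def using w by (simp add: field_simps)
qed

lemma OUT: assumes r: "r > 0" and eps: "\<epsilon> > 0"
  shows "\<forall>\<^sub>F s in at_right 0. \<forall>w. r \<le> norm w \<longrightarrow> norm (Qo s w - 1) \<le> \<epsilon>"
proof -
  have lim: "\<forall>i\<in>{1..n-1}. ((\<lambda>s. (cc d n s i / r) ^ DD d i) \<longlongrightarrow> 0) (at_right 0)"
  proof
    fix i assume i: "i \<in> {1..n-1}"
    have "((\<lambda>s. (cc d n s i / r) ^ DD d i) \<longlongrightarrow> (0 / r) ^ DD d i) (at_right 0)"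
      using i r by (intro tendsto_intros cc_to0) auto
    moreover have z: "(0 / r) ^ DD d i = (0::real)" using DD_pos[OF i] by (simp add: power_0_left)
    ultimately show "((\<lambda>s. (cc d n s i / r) ^ DD d i) \<longlongrightarrow> 0) (at_right 0)" by metis
  qed
  have ev: "\<forall>\<^sub>F s in at_right 0. \<forall>a::nat\<Rightarrow>complex. (\<forall>i\<in>{1..n-1}. norm (a i) \<le> (cc d n s i / r) ^ DD d i) \<longrightarrow>
            norm ((\<Prod>i\<in>{1..n-1}. (1 - a i) powi ((-1)^i)) - 1) \<le> \<epsilon>"
    by (rule prod_small[OF _ _ lim eps]) (auto simp: neg1pow)
  show ?thesis using ev ev_pos
  proof eventually_elim
    case (elim s)
    show ?case
    proof (intro allI impI)
      fix w :: complex assume rw: "r \<le> norm w"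
      have "\<forall>i\<in>{1..n-1}. norm (C s i / w ^ DD d i) \<le> (cc d n s i / r) ^ DD d i"
      proof
        fix i assume i: "i \<in> {1..n-1}"
        have c0: "0 \<le> cc d n s i" using cc_pos[of s i] elim i by auto
        have "norm (C s i / w ^ DD d i) = (cc d n s i / norm w) ^ DD d i"
          unfolding C_def using c0 by (simp add: norm_divide norm_power power_divide)
        also have "\<dots> \<le> (cc d n s i / r) ^ DD d i"
          by (intro power_mono divide_left_mono) (use c0 r rw in \<open>auto intro!: mult_pos_pos\<close>)
        finally show "norm (C s i / w ^ DD d i) \<le> (cc d n s i / r) ^ DD d i" .
      qed
      thus "norm (Qo s w - 1) \<le> \<epsilon>" using elim(1)[rule_format, of "\<lambda>i. C s i / w ^ DD d i"] unfolding Qo_def by blast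
    qed
  qed
qed

lemma IN: assumes K: "K \<ge> 0" and eps: "\<epsilon> > 0"
  shows "\<forall>\<^sub>F s in at_right 0. \<forall>w. norm w \<le> K * sig s \<longrightarrow> norm (Qi s w - 1) \<le> \<epsilon>"
proof -
  have lim: "\<forall>i\<in>{1..n-1}. ((\<lambda>s. (K * (sig s / cc d n s i)) ^ DD d i) \<longlongrightarrow> 0) (at_right 0)"
  proof
    fix i assume i: "i \<in> {1..n-1}"
    have "((\<lambda>s. K * (sig s / cc d n s i)) \<longlongrightarrow> K * 0) (at_right 0)"
      using i by (intro tendsto_mult tendsto_const ratio_to0) auto
    hence "((\<lambda>s. (K * (sig s / cc d n s i)) ^ DD d i) \<longlongrightarrow> (K * 0) ^ DD d i) (at_right 0)"
      by (rule tendsto_power)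
    moreover have z: "(K * 0) ^ DD d i = (0::real)" using DD_pos[OF i] by (simp add: power_0_left)
    ultimately show "((\<lambda>s. (K * (sig s / cc d n s i)) ^ DD d i) \<longlongrightarrow> 0) (at_right 0)" by metis
  qed
  have ev: "\<forall>\<^sub>F s in at_right 0. \<forall>a::nat\<Rightarrow>complex. (\<forall>i\<in>{1..n-1}. norm (a i) \<le> (K * (sig s / cc d n s i)) ^ DD d i) \<longrightarrow>
            norm ((\<Prod>i\<in>{1..n-1}. (1 - a i) powi ((-1)^i)) - 1) \<le> \<epsilon>"
    by (rule prod_small[OF _ _ lim eps]) (auto simp: neg1pow)
  show ?thesis using ev ev_pos
  proof eventually_elim
    case (elim s)
    show ?case
    proof (intro allI impI)
      fix w :: complex assume rw: "norm w \<le> K * sig s"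
      have "\<forall>i\<in>{1..n-1}. norm (w ^ DD d i / C s i) \<le> (K * (sig s / cc d n s i)) ^ DD d i"
      proof
        fix i assume i: "i \<in> {1..n-1}"
        have c0: "0 < cc d n s i" using cc_pos[of s i] elim i by auto
        have "norm (w ^ DD d i / C s i) = (norm w / cc d n s i) ^ DD d i"
          unfolding C_def using c0 by (simp add: norm_divide norm_power power_divide)
        also have "\<dots> \<le> (K * (sig s / cc d n s i)) ^ DD d i"
          by (intro power_mono) (use c0 rw in \<open>auto simp: divide_right_mono field_simps\<close>)
        finally show "norm (w ^ DD d i / C s i) \<le> (K * (sig s / cc d n s i)) ^ DD d i" .
      qed
      thus "norm (Qi s w - 1) \<le> \<epsilon>" using elim(1)[rule_format, of "\<lambda>i. w ^ DD d i / C s i"] unfolding Qi_def by blast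
    qed
  qed
qed

lemma Cont: assumes s: "0 < s" and w: "w \<noteq> 0" and nw: "\<forall>i\<in>{1..n-1}. norm w \<noteq> cc d n s i"
  shows "isCont (Rfun d n S T s) w"
proof -
  have "\<forall>i\<in>{1..n-1}. w ^ DD d i - complex_of_real (cc d n s i ^ DD d i) \<noteq> 0"
    using pow_ne nw cc_pos[OF s] DD_pos by (metis atLeastAtMost_iff eq_iff_diff_eq_0 less_imp_le)
  thus ?thesis unfolding Rfun_def [abs_def] using w
    by (intro continuous_intros) auto
qed

lemma DD_nz: "i \<in> {1..n-1} \<Longrightarrow> DD d i \<noteq> 0" using DD_pos by fastforce

lemma Qi0: "0 < s \<Longrightarrow> Qi s 0 = 1"
  unfolding Qi_def
proof (intro prod.neutral ballI)
  fix i assume "i \<in> {1..n-1}"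
  hence "DD d i > 0" by (rule DD_pos)
  thus "(1 - 0 ^ DD d i / C s i) powi (-1) ^ i = 1" by (simp add: power_0_left)
qed

lemma Qi_cont: "0 < s \<Longrightarrow> isCont (Qi s) 0"
  unfolding Qi_def [abs_def] using C_nz by (intro continuous_intros) (auto simp: power_0_left DD_nz)

lemma NoLim0: assumes s: "0 < s" and S: "S \<noteq> 0"
  shows "\<not> (\<exists>L. (Rfun d n S T s \<longlongrightarrow> L) (at 0))"
proof
  assume "\<exists>L. (Rfun d n S T s \<longlongrightarrow> L) (at 0)"
  then obtain L where L: "(Rfun d n S T s \<longlongrightarrow> L) (at 0)" by blast
  have 1: "((\<lambda>w. Rfun d n S T s w * w ^ d n) \<longlongrightarrow> L * 0 ^ d n) (at 0)"
    by (intro tendsto_intros L)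
  have dn0: "d n \<noteq> 0" using dn by simp
  hence 1: "((\<lambda>w. Rfun d n S T s w * w ^ d n) \<longlongrightarrow> 0) (at 0)" using 1 by (simp add: power_0_left)
  have "((\<lambda>w. of_real S * P0 s * Qi s w + of_real T * w ^ d n) \<longlongrightarrow> of_real S * P0 s * Qi s 0 + of_real T * 0 ^ d n) (at 0)"
    using Qi_cont[OF s] by (intro tendsto_intros) (auto simp: isCont_def)
  hence 2: "((\<lambda>w. of_real S * P0 s * Qi s w + of_real T * w ^ d n) \<longlongrightarrow> of_real S * P0 s) (at 0)"
    using dn0 Qi0[OF s] by (simp add: power_0_left)
  have "\<forall>\<^sub>F w in at 0. of_real S * P0 s * Qi s w + of_real T * w ^ d n = Rfun d n S T s w * w ^ d n"
    using eventually_neq_at_within[of 0 0 UNIV]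
    by eventually_elim (simp add: F2[OF s] field_simps)
  hence "((\<lambda>w. Rfun d n S T s w * w ^ d n) \<longlongrightarrow> of_real S * P0 s) (at 0)"
    using 2 by (rule Lim_transform_eventually[rotated])
  hence "of_real S * P0 s = 0" using 1 by (rule tendsto_unique[rotated]) simp
  thus False using S P0_nz[OF s] by simp
qed

lemma Inf: assumes s: "0 < s"
  shows "(Rfun d n S T s \<longlongrightarrow> of_real T) at_infinity"
proof -
  have "((\<lambda>w. of_real S * (\<Prod>i\<in>{1..n-1}. (1 - C s i * inverse w ^ DD d i) powi ((-1)^i)) * inverse w ^ d 1 + of_real T)
     \<longlongrightarrow> of_real S * (\<Prod>i\<in>{1..n-1}. (1 - C s i * 0 ^ DD d i) powi ((-1)^i)) * 0 ^ d 1 + of_real T) at_infinity"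
    by (intro tendsto_intros tendsto_inverse_0) (auto simp: power_0_left DD_nz)
  moreover have "(\<Prod>i\<in>{1..n-1}. (1 - C s i * 0 ^ DD d i) powi ((-1)^i)) = 1"
  proof (intro prod.neutral ballI)
    fix i assume "i \<in> {1..n-1}"
    hence "DD d i > 0" by (rule DD_pos)
    thus "(1 - C s i * 0 ^ DD d i) powi (-1) ^ i = 1" by (simp add: power_0_left)
  qed
  ultimately have 1: "((\<lambda>w. of_real S * (\<Prod>i\<in>{1..n-1}. (1 - C s i * inverse w ^ DD d i) powi ((-1)^i)) * inverse w ^ d 1 + of_real T)
     \<longlongrightarrow> of_real T) at_infinity" using d1 by (simp add: zero_power)
  have "\<forall>\<^sub>F w in at_infinity. of_real S * (\<Prod>i\<in>{1..n-1}. (1 - C s i * inverse w ^ DD d i) powi ((-1)^i)) * inverse w ^ d 1 + of_real T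
      = Rfun d n S T s w"
    using ev_inf_nz by eventually_elim
      (simp add: F1[OF s] Qo_def divide_inverse power_inverse)
  thus ?thesis using 1 by (rule Lim_transform_eventually[rotated])
qed

end



lemma sph_tend: "(f \<longlongrightarrow> l) (at z) \<Longrightarrow> sph_ext f (Some z) = Some l"
  unfolding sph_ext_def by (auto intro: tendsto_Lim)

lemma ev_not_in_finite:
  fixes z :: complex
  assumes "finite A" shows "\<forall>\<^sub>F w in at z. w \<notin> A"
proof -
  have "\<forall>\<^sub>F w in at z. \<forall>y\<in>A. w \<noteq> y"
    using assms by (rule eventually_ball_finite) (auto intro: eventually_neq_at_within)
  thus ?thesis by eventually_elim auto
qed

lemma GEXT:
  fixes f g :: "complex \<Rightarrow> complex"
  assumes fg: "\<forall>w. w \<noteq> 0 \<longrightarrow> f w = inverse (g w)" and gc: "isCont g z"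
    and fin: "finite {w. g w = 0}"
  shows "rec (sph_ext f (Some z)) = g z \<and> sph_ext f (Some z) \<noteq> Some 0"
proof (cases "g z = 0")
  case False
  have "((\<lambda>w. inverse (g w)) \<longlongrightarrow> inverse (g z)) (at z)"
    using gc False by (intro tendsto_intros) (auto simp: isCont_def)
  moreover have "\<forall>\<^sub>F w in at z. inverse (g w) = f w"
    using eventually_neq_at_within[of 0 z UNIV] by eventually_elim (use fg in auto)
  ultimately have "(f \<longlongrightarrow> inverse (g z)) (at z)" by (rule Lim_transform_eventually)
  hence "sph_ext f (Some z) = Some (inverse (g z))" by (rule sph_tend)
  thus ?thesis using False by simp
next
  case True
  have "\<not> (\<exists>L. (f \<longlongrightarrow> L) (at z))"
  proof
    assume "\<exists>L. (f \<longlongrightarrow> L) (at z)"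
    then obtain L where L: "(f \<longlongrightarrow> L) (at z)" by blast
    have "((\<lambda>w. f w * g w) \<longlongrightarrow> L * g z) (at z)"
      using L gc by (intro tendsto_intros) (auto simp: isCont_def)
    hence 1: "((\<lambda>w. f w * g w) \<longlongrightarrow> 0) (at z)" using True by simp
    have "\<forall>\<^sub>F w in at z. 1 = f w * g w"
      using eventually_neq_at_within[of 0 z UNIV] ev_not_in_finite[OF fin, of z]
      by eventually_elim (use fg in auto)
    hence "((\<lambda>w. f w * g w) \<longlongrightarrow> 1) (at z)" by (rule Lim_transform_eventually[rotated]) simp
    hence "(1::complex) = 0" using 1 by (rule tendsto_unique[rotated]) simp
    thus False by simp
  qed
  hence "sph_ext f (Some z) = None" by (rule sph_nolim)
  thus ?thesis using True by simp
qed

lemma GEXT_inf: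
  fixes f g :: "complex \<Rightarrow> complex"
  assumes fg: "\<forall>w. w \<noteq> 0 \<longrightarrow> f w = inverse (g w)" and gl: "(g \<longlongrightarrow> l) at_infinity" and l: "l \<noteq> 0"
  shows "sph_ext f None = Some (inverse l)"
proof -
  have "((\<lambda>w. inverse (g w)) \<longlongrightarrow> inverse l) at_infinity" using gl l by (intro tendsto_intros)
  moreover have "\<forall>\<^sub>F w in at_infinity. inverse (g w) = f w"
    using ev_inf_nz by eventually_elim (use fg in auto)
  ultimately have "(f \<longlongrightarrow> inverse l) at_infinity" by (rule Lim_transform_eventually)
  thus ?thesis by (rule sph_inf)
qed

lemma psi_rec: assumes "z0 \<noteq> 0"
  shows "rec (psi z0 (Some a)) = a / complex_of_real z0 \<and> psi z0 (Some a) \<noteq> Some 0"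
  unfolding psi_def
proof (rule GEXT[where g = "\<lambda>w. w / complex_of_real z0"])
  show "\<forall>w. w \<noteq> 0 \<longrightarrow> complex_of_real z0 / w = inverse (w / complex_of_real z0)" by simp
  show "isCont (\<lambda>w. w / complex_of_real z0) a" using assms by (intro continuous_intros) auto
  have "{w. w / complex_of_real z0 = 0} = {0}" using assms by auto
  thus "finite {w. w / complex_of_real z0 = 0}" by simp
qed

lemma psi_some: "z0 \<noteq> 0 \<Longrightarrow> a \<noteq> 0 \<Longrightarrow> psi z0 (Some a) = Some (complex_of_real z0 / a)"
  using psi_rec[of z0 a] rec_inv[of "psi z0 (Some a)" "a / complex_of_real z0"] by simp

lemma psi_zero: "z0 \<noteq> 0 \<Longrightarrow> psi z0 (Some 0) = None"
  using psi_rec[of z0 0] by (cases "psi z0 (Some 0)") auto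

lemma psi_none: "psi z0 None = Some 0"
  unfolding psi_def
proof (rule sph_inf)
  have "((\<lambda>w. complex_of_real z0 * inverse w) \<longlongrightarrow> complex_of_real z0 * 0) at_infinity"
    by (intro tendsto_intros tendsto_inverse_0)
  thus "((\<lambda>w. complex_of_real z0 / w) \<longlongrightarrow> 0) at_infinity" by (simp add: divide_inverse)
qed

lemma psi_psi: assumes z: "z0 \<noteq> 0" shows "psi z0 (psi z0 x) = x"
proof (cases x)
  case None then show ?thesis using psi_none psi_zero[OF z] by simp
next
  case (Some a)
  show ?thesis
  proof (cases "a = 0")
    case True then show ?thesis using Some z psi_none psi_zero by simp
  next
    case False
    then show ?thesis using Some z psi_some[OF z] by simp
  qed
qed

lemma kfacts: assumes "a * b \<ge> (2::nat)"
  shows "real a * real b \<ge> 2" "complex_of_nat a * complex_of_nat b \<noteq> 1" "real (a*b) \<ge> 2"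
proof -
  show r: "real (a*b) \<ge> 2" using assms by (metis of_nat_le_iff of_nat_numeral)
  thus "real a * real b \<ge> 2" by simp
  have "a * b \<noteq> 1" using assms by auto
  hence "complex_of_nat (a * b) \<noteq> 1" by (metis of_nat_eq_1_iff)
  thus "complex_of_nat a * complex_of_nat b \<noteq> 1" by simp
qed

lemma Bnz: "a * b \<ge> 2 \<Longrightarrow> \<mu> > 0 \<Longrightarrow> complex_of_real ((real (a*b) * \<mu>)^c) \<noteq> 0"
proof -
  assume "a * b \<ge> 2" "\<mu> > 0"
  moreover have "real (a*b) > 0" using kfacts(3)[OF \<open>a * b \<ge> 2\<close>] by linarith
  ultimately have "real (a*b) * \<mu> > 0" by (intro mult_pos_pos)
  hence p: "(real (a*b) * \<mu>)^c \<noteq> 0" by (intro power_not_zero) linarith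
  thus ?thesis using of_real_eq_0_iff by blast
qed

lemma Bnz2: "a * b \<ge> 2 \<Longrightarrow> \<mu> > 0 \<Longrightarrow> complex_of_real ((real (a*b) - 1) * \<mu>) \<noteq> 0"
proof -
  assume "a * b \<ge> 2" "\<mu> > 0"
  moreover have "real (a*b) - 1 > 0" using kfacts(3)[OF \<open>a * b \<ge> 2\<close>] by linarith
  ultimately have "(real (a*b) - 1) * \<mu> > 0" by (intro mult_pos_pos)
  hence p: "(real (a*b) - 1) * \<mu> \<noteq> 0" by linarith
  thus ?thesis using of_real_eq_0_iff by blast
qed

definition Vh :: "real \<Rightarrow> nat \<Rightarrow> nat \<Rightarrow> complex \<Rightarrow> complex" where
  "Vh \<mu> a k w = complex_of_real \<mu> / w ^ a + complex_of_real ((real k - 1) * \<mu>)"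

lemma h2_eq:
  assumes a: "a > 0" and b: "b > 0" and k: "a * b \<ge> 2" and mu: "\<mu> > 0" and w: "w \<noteq> 0"
  shows "h2 a b w = inverse (Vh \<mu> a (a*b) w ^ b / complex_of_real ((real (a*b) * \<mu>)^b))"
proof -
  define D where "D = 1 + (of_nat (a*b) - 1) * w ^ a"
  have V: "Vh \<mu> a (a*b) w = complex_of_real \<mu> * D / w ^ a"
    unfolding Vh_def D_def using w by (simp add: field_simps)
  show ?thesis
  proof (cases "D = 0")
    case True
    thus ?thesis using V unfolding h2_def D_def using b by (simp add: power_0_left)
  next
    case False
    have "h2 a b w = (of_nat (a*b))^b * w^(a*b) / D^b" unfolding h2_def D_def ..
    also have "\<dots> = inverse ((complex_of_real \<mu> * D / w ^ a) ^ b / complex_of_real ((real (a*b) * \<mu>)^b))"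
      using False w mu by (simp add: field_simps power_mult_distrib power_mult flip: power_mult_distrib)
    finally show ?thesis using V by simp
  qed
qed

lemma H:
  assumes a: "a > 0" and b: "b > 0" and k: "a * b \<ge> 2" and mu: "\<mu> > 0" and z: "z \<noteq> 0"
  shows "rec (sph_ext (h2 a b) (Some z)) = Vh \<mu> a (a*b) z ^ b / complex_of_real ((real (a*b) * \<mu>)^b)
       \<and> sph_ext (h2 a b) (Some z) \<noteq> Some 0"
proof (rule GEXT)
  show "\<forall>w. w \<noteq> 0 \<longrightarrow> h2 a b w = inverse (Vh \<mu> a (a*b) w ^ b / complex_of_real ((real (a*b) * \<mu>)^b))"
    using h2_eq[OF a b k mu] by blast
  show "isCont (\<lambda>w. Vh \<mu> a (a*b) w ^ b / complex_of_real ((real (a*b) * \<mu>)^b)) z"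
    unfolding Vh_def using z a b k mu by (intro continuous_intros) auto
  have "{w. Vh \<mu> a (a*b) w ^ b / complex_of_real ((real (a*b) * \<mu>)^b) = 0}
        \<subseteq> {w. w ^ a = complex_of_real (- 1 / (real (a*b) - 1))}"
  proof
    fix w assume "w \<in> {w. Vh \<mu> a (a*b) w ^ b / complex_of_real ((real (a*b) * \<mu>)^b) = 0}"
    hence V0: "Vh \<mu> a (a*b) w = 0" using mu a b by auto
    have "real (a*b) \<ge> 2" using k by (metis of_nat_le_iff of_nat_numeral)
    hence k1: "real (a*b) - 1 \<noteq> 0" by linarith
    have w0: "w \<noteq> 0"
    proof
      assume "w = 0"
      hence "Vh \<mu> a (a*b) w = complex_of_real ((real (a*b) - 1) * \<mu>)" unfolding Vh_def using a by simp
      thus False using V0 Bnz2[OF k mu] by metis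
    qed
    have "complex_of_real \<mu> / w ^ a = - complex_of_real ((real (a*b) - 1) * \<mu>)"
      using V0 unfolding Vh_def by (simp add: eq_neg_iff_add_eq_0)
    hence "complex_of_real \<mu> = - complex_of_real ((real (a*b) - 1) * \<mu>) * w ^ a"
      using w0 by (simp add: field_simps)
    hence "w ^ a = - complex_of_real \<mu> / complex_of_real ((real (a*b) - 1) * \<mu>)"
    proof -
      assume eq: "complex_of_real \<mu> = - complex_of_real ((real (a*b) - 1) * \<mu>) * w ^ a"
      define c where "c = complex_of_real ((real (a*b) - 1) * \<mu>)"
      have cnz: "c \<noteq> 0" unfolding c_def by (rule Bnz2[OF k mu])
      have eq': "complex_of_real \<mu> = - c * w ^ a" using eq unfolding c_def .
      have "w ^ a * c = - complex_of_real \<mu>" by (simp add: eq' mult.commute)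
      thus ?thesis unfolding c_def[symmetric] using cnz by (subst nonzero_eq_divide_eq) auto
    qed
    also have "\<dots> = complex_of_real (- \<mu> / ((real (a*b) - 1) * \<mu>))" by simp
    also have "- \<mu> / ((real (a*b) - 1) * \<mu>) = - 1 / (real (a*b) - 1)" using mu by simp
    finally have "w ^ a = complex_of_real (- 1 / (real (a*b) - 1))" .
    thus "w \<in> {w. w ^ a = complex_of_real (- 1 / (real (a*b) - 1))}" by simp
  qed
  thus "finite {w. Vh \<mu> a (a*b) w ^ b / complex_of_real ((real (a*b) * \<mu>)^b) = 0}"
    using finite_nth_roots[OF a] by (rule finite_subset)
qed

lemma Vh_inf: "a > 0 \<Longrightarrow> (Vh \<mu> a k \<longlongrightarrow> complex_of_real ((real k - 1) * \<mu>)) at_infinity"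
proof -
  assume a: "a > 0"
  have "((\<lambda>w. complex_of_real \<mu> * inverse w ^ a + complex_of_real ((real k - 1) * \<mu>))
     \<longlongrightarrow> complex_of_real \<mu> * 0 ^ a + complex_of_real ((real k - 1) * \<mu>)) at_infinity"
    by (intro tendsto_intros tendsto_inverse_0)
  thus ?thesis unfolding Vh_def [abs_def] using a by (simp add: divide_inverse power_inverse power_0_left)
qed

lemma H_inf:
  assumes a: "a > 0" and b: "b > 0" and k: "a * b \<ge> 2" and mu: "\<mu> > 0"
  shows "sph_ext (h2 a b) None = Some (inverse (complex_of_real ((real (a*b) - 1) * \<mu>) ^ b / complex_of_real ((real (a*b) * \<mu>)^b)))"
proof (rule GEXT_inf)
  show "\<forall>w. w \<noteq> 0 \<longrightarrow> h2 a b w = inverse (Vh \<mu> a (a*b) w ^ b / complex_of_real ((real (a*b) * \<mu>)^b))"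
    using h2_eq[OF a b k mu] by blast
  show "((\<lambda>w. Vh \<mu> a (a*b) w ^ b / complex_of_real ((real (a*b) * \<mu>)^b)) \<longlongrightarrow>
    complex_of_real ((real (a*b) - 1) * \<mu>) ^ b / complex_of_real ((real (a*b) * \<mu>)^b)) at_infinity"
    by (intro tendsto_intros Vh_inf a Bnz k mu)
  show "complex_of_real ((real (a*b) - 1) * \<mu>) ^ b / complex_of_real ((real (a*b) * \<mu>)^b) \<noteq> 0"
    by (metis divide_eq_0_iff power_eq_0_iff Bnz[OF k mu] Bnz2[OF k mu])
qed

lemma h1_h2: "h1 k = h2 k 1"
  unfolding h1_def h2_def by auto




context Lc begin

lemma small_sig: assumes K: "K \<ge> 0"
  shows "\<forall>\<^sub>F s in at_right 0. \<forall>i\<in>{1..n-1}. K * sig s < cc d n s i"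
proof (rule eventually_ball_finite[OF finite_atLeastAtMost], rule ballI)
  fix i assume i: "i \<in> {1..n-1}"
  have "\<forall>\<^sub>F s in at_right 0. sig s / cc d n s i < 1 / (K + 1)"
    using ratio_to0[of i] i K by (intro order_tendstoD) auto
  thus "\<forall>\<^sub>F s in at_right 0. K * sig s < cc d n s i" using ev_pos
  proof eventually_elim
    case (elim s)
    have c: "cc d n s i > 0" using cc_pos[of s i] elim i by auto
    have sg: "sig s > 0" using elim unfolding sig_def by simp
    have "sig s < cc d n s i / (K + 1)" using elim c K by (simp add: field_simps)
    hence "(K + 1) * sig s < cc d n s i" using K by (simp add: field_simps)
    thus ?case using sg by (simp add: algebra_simps)
  qed
qed

lemma big_r: assumes r: "r > 0"
  shows "\<forall>\<^sub>F s in at_right 0. \<forall>i\<in>{1..n-1}. cc d n s i < r"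
proof (rule eventually_ball_finite[OF finite_atLeastAtMost], rule ballI)
  fix i assume i: "i \<in> {1..n-1}"
  show "\<forall>\<^sub>F s in at_right 0. cc d n s i < r"
    using cc_to0[of i] i r by (intro order_tendstoD) auto
qed

lemma QiG:
  fixes s :: "'p \<Rightarrow> real"
  assumes fs: "filterlim s (at_right 0) G" and K: "K \<ge> 0"
    and w: "\<forall>\<^sub>F p in G. norm (w p) \<le> K * sig (s p)"
  shows "((\<lambda>p. Qi (s p) (w p)) \<longlongrightarrow> 1) G"
proof (rule tendstoI)
  fix e :: real assume e: "e > 0"
  have h: "e/2 > 0" using e by simp
  have "\<forall>\<^sub>F p in G. \<forall>w. norm w \<le> K * sig (s p) \<longrightarrow> norm (Qi (s p) w - 1) \<le> e/2"
    by (rule eventually_compose_filterlim[OF IN[OF K h] fs])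
  thus "\<forall>\<^sub>F p in G. dist (Qi (s p) (w p)) 1 < e" using w
  proof eventually_elim
    case (elim p)
    hence "norm (Qi (s p) (w p) - 1) \<le> e/2" by blast
    thus ?case using e by (simp add: dist_norm)
  qed
qed

lemma QoG:
  fixes s :: "'p \<Rightarrow> real"
  assumes fs: "filterlim s (at_right 0) G" and r: "r > 0"
    and w: "\<forall>\<^sub>F p in G. r \<le> norm (w p)"
  shows "((\<lambda>p. Qo (s p) (w p)) \<longlongrightarrow> 1) G"
proof (rule tendstoI)
  fix e :: real assume e: "e > 0"
  have h: "e/2 > 0" using e by simp
  have "\<forall>\<^sub>F p in G. \<forall>w. r \<le> norm w \<longrightarrow> norm (Qo (s p) w - 1) \<le> e/2"
    by (rule eventually_compose_filterlim[OF OUT[OF r h] fs])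
  thus "\<forall>\<^sub>F p in G. dist (Qo (s p) (w p)) 1 < e" using w
  proof eventually_elim
    case (elim p)
    hence "norm (Qo (s p) (w p) - 1) \<le> e/2" by blast
    thus ?case using e by (simp add: dist_norm)
  qed
qed

lemma sig_pos: "0 < s \<Longrightarrow> 0 < sig s" unfolding sig_def by simp

lemma mu_pos: "mu d n > 0"
  unfolding mu_def using d1 dn dmax_ge by (intro mult_pos_pos) auto

lemma k_ge: "d 1 * d n \<ge> 2" using mult_le_mono[OF d1 dn] by simp

end

locale Lz = Lc +
  fixes S T z0 :: "real \<Rightarrow> real"
  assumes eq1: "\<forall>\<^sub>F s in at_right 0. Rfun d n (S s) (T s) s (complex_of_real (z0 s)) = 1"
    and limS: "((\<lambda>s. S s / s powr nu d n) \<longlongrightarrow> mu d n) (at_right 0)"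
    and limT: "((\<lambda>s. T s / s powr nu d n) \<longlongrightarrow> (real (d 1 * d n) - 1) * mu d n) (at_right 0)"
    and limz: "((\<lambda>s. z0 s / s powr nu d n) \<longlongrightarrow> real (d 1 * d n) * mu d n) (at_right 0)"
begin

abbreviation "k \<equiv> d 1 * d n"
abbreviation "\<mu> \<equiv> mu d n"
definition "Bc = complex_of_real ((real k * \<mu>) ^ d n)"
definition "beta s = complex_of_real (S s) * P0 s / complex_of_real (sig s) ^ d n"

lemma Bc_nz: "Bc \<noteq> 0" unfolding Bc_def using Bnz[OF k_ge mu_pos] .

lemma kmu: "real k * \<mu> > 0" "(real k - 1) * \<mu> > 0"
  using kfacts(3)[OF k_ge] mu_pos by auto

lemma evpos: "\<forall>\<^sub>F s in at_right 0. 0 < s \<and> 0 < sig s \<and> 0 < S s \<and> 0 < T s \<and> 0 < z0 s"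
proof -
  have 1: "\<forall>\<^sub>F s in at_right 0. S s / sig s > 0"
    using order_tendstoD(1)[OF limS mu_pos] unfolding sig_def by simp
  have 2: "\<forall>\<^sub>F s in at_right 0. T s / sig s > 0"
    using order_tendstoD(1)[OF limT kmu(2)] unfolding sig_def by simp
  have 3: "\<forall>\<^sub>F s in at_right 0. z0 s / sig s > 0"
    using order_tendstoD(1)[OF limz kmu(1)] unfolding sig_def by simp
  show ?thesis using 1 2 3 ev_pos
  proof eventually_elim
    case (elim s)
    have "sig s > 0" using sig_pos elim by auto
    thus ?case using elim by (auto simp: zero_less_divide_iff)
  qed
qed

lemma sig_to0c: "((\<lambda>s. complex_of_real (sig s)) \<longlongrightarrow> 0) (at_right 0)"
  using tendsto_of_real[OF sig_to0] by simp

lemma T_to0: "((\<lambda>s. complex_of_real (T s)) \<longlongrightarrow> 0) (at_right 0)"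
proof -
  have "((\<lambda>s. complex_of_real (T s / sig s) * complex_of_real (sig s)) \<longlongrightarrow>
      complex_of_real ((real k - 1) * \<mu>) * 0) (at_right 0)"
    using limT unfolding sig_def[symmetric] by (intro tendsto_intros sig_to0c)
  moreover have "\<forall>\<^sub>F s in at_right 0. complex_of_real (T s / sig s) * complex_of_real (sig s) = complex_of_real (T s)"
    using evpos
  proof eventually_elim
    case (elim s)
    have "T s / sig s * sig s = T s" using elim by simp
    thus ?case by (metis of_real_mult)
  qed
  ultimately show ?thesis by (simp add: tendsto_cong)
qed

lemma beta_lim: "(beta \<longlongrightarrow> Bc) (at_right 0)"
proof -
  define u0 where "u0 s = complex_of_real (z0 s / sig s)" for s
  have u0l: "(u0 \<longlongrightarrow> complex_of_real (real k * \<mu>)) (at_right 0)"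
    unfolding u0_def using limz unfolding sig_def[symmetric] by (intro tendsto_intros)
  define K where "K = real k * \<mu> + 1"
  have K0: "K \<ge> 0" unfolding K_def using kmu by simp
  have evK: "\<forall>\<^sub>F s in at_right 0. z0 s / sig s < K"
    using limz unfolding sig_def[symmetric] K_def by (intro order_tendstoD) auto
  have Ql: "((\<lambda>s. Qi s (complex_of_real (z0 s))) \<longlongrightarrow> 1) (at_right 0)"
  proof (rule QiG[OF filterlim_ident K0])
    show "\<forall>\<^sub>F s in at_right 0. norm (complex_of_real (z0 s)) \<le> K * sig s"
      using evK evpos by eventually_elim (auto simp: field_simps)
  qed
  have "((\<lambda>s. (1 - complex_of_real (T s)) * u0 s ^ d n / Qi s (complex_of_real (z0 s))) \<longlongrightarrow>
          (1 - 0) * complex_of_real (real k * \<mu>) ^ d n / 1) (at_right 0)"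
    by (intro tendsto_intros T_to0 u0l Ql) simp
  hence lim: "((\<lambda>s. (1 - complex_of_real (T s)) * u0 s ^ d n / Qi s (complex_of_real (z0 s))) \<longlongrightarrow> Bc) (at_right 0)"
    unfolding Bc_def by (simp add: of_real_power)
  have Qnz: "\<forall>\<^sub>F s in at_right 0. Qi s (complex_of_real (z0 s)) \<noteq> 0"
    using Ql by (rule tendsto_imp_eventually_ne) simp
  have "\<forall>\<^sub>F s in at_right 0. (1 - complex_of_real (T s)) * u0 s ^ d n / Qi s (complex_of_real (z0 s)) = beta s"
    using eq1 evpos Qnz
  proof eventually_elim
    case (elim s)
    have s: "0 < s" and sg: "sig s > 0" and z: "z0 s > 0" using elim by auto
    have "sig s * (z0 s / sig s) = z0 s" using sg by simp
    hence zu: "complex_of_real (z0 s) = complex_of_real (sig s) * u0 s"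
      unfolding u0_def by (metis of_real_mult)
    have u0nz: "u0 s \<noteq> 0" unfolding u0_def using sg z by simp
    have "1 = complex_of_real (S s) * P0 s * Qi s (complex_of_real (z0 s)) / complex_of_real (z0 s) ^ d n + complex_of_real (T s)"
      using elim(1) F2[OF s] by simp
    also have "\<dots> = beta s * Qi s (complex_of_real (z0 s)) / u0 s ^ d n + complex_of_real (T s)"
      unfolding beta_def zu using sg u0nz by (simp add: power_mult_distrib field_simps)
    finally have "1 - complex_of_real (T s) = beta s * Qi s (complex_of_real (z0 s)) / u0 s ^ d n"
      by (simp add: algebra_simps)
    thus ?case using elim(3) u0nz by (simp add: field_simps)
  qed
  thus ?thesis using lim by (rule Lim_transform_eventually[rotated])
qed

end



context Lz begin

lemma INNER:
  fixes s :: "'p \<Rightarrow> real" and u :: "'p \<Rightarrow> complex"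
  assumes fs: "filterlim s (at_right 0) G" and K: "K \<ge> 0" and ub: "\<forall>\<^sub>F p in G. norm (u p) \<le> K"
  shows "\<forall>\<^sub>F p in G. sph_ext (Rfun d n (S (s p)) (T (s p)) (s p)) (Some (complex_of_real (sig (s p)) * u p)) \<noteq> Some 0
        \<and> (u p \<noteq> 0 \<longrightarrow> sph_ext (Rfun d n (S (s p)) (T (s p)) (s p)) (Some (complex_of_real (sig (s p)) * u p))
                 = Some (Rfun d n (S (s p)) (T (s p)) (s p) (complex_of_real (sig (s p)) * u p))
              \<and> Rfun d n (S (s p)) (T (s p)) (s p) (complex_of_real (sig (s p)) * u p) \<noteq> 0)"
    and "((\<lambda>p. rec (sph_ext (Rfun d n (S (s p)) (T (s p)) (s p)) (Some (complex_of_real (sig (s p)) * u p)))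
            - u p ^ d n / Bc) \<longlongrightarrow> 0) G"
proof -
  define X where "X p = sph_ext (Rfun d n (S (s p)) (T (s p)) (s p)) (Some (complex_of_real (sig (s p)) * u p))" for p
  define Den where "Den p = beta (s p) * Qi (s p) (complex_of_real (sig (s p)) * u p) + complex_of_real (T (s p)) * u p ^ d n" for p
  have evp: "\<forall>\<^sub>F p in G. 0 < s p \<and> 0 < sig (s p) \<and> 0 < S (s p) \<and> 0 < T (s p) \<and> 0 < z0 (s p)"
    by (rule eventually_compose_filterlim[OF evpos fs])
  have evc: "\<forall>\<^sub>F p in G. \<forall>i\<in>{1..n-1}. K * sig (s p) < cc d n (s p) i"
    by (rule eventually_compose_filterlim[OF small_sig[OF K] fs])
  have Qlim: "((\<lambda>p. Qi (s p) (complex_of_real (sig (s p)) * u p)) \<longlongrightarrow> 1) G"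
  proof (rule QiG[OF fs K])
    show "\<forall>\<^sub>F p in G. norm (complex_of_real (sig (s p)) * u p) \<le> K * sig (s p)"
      using evp ub
    proof eventually_elim
      case (elim p)
      have "norm (complex_of_real (sig (s p)) * u p) = sig (s p) * norm (u p)"
        using elim by (simp add: norm_mult)
      also have "\<dots> \<le> sig (s p) * K" using elim by (intro mult_left_mono) auto
      finally show ?case by (simp add: mult.commute)
    qed
  qed
  have blim: "((\<lambda>p. beta (s p)) \<longlongrightarrow> Bc) G" by (rule filterlim_compose[OF beta_lim fs])
  have Tlim: "((\<lambda>p. complex_of_real (T (s p))) \<longlongrightarrow> 0) G" by (rule filterlim_compose[OF T_to0 fs])
  have Tu: "((\<lambda>p. complex_of_real (T (s p)) * u p ^ d n) \<longlongrightarrow> 0) G"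
  proof (rule ZB[OF Tlim])
    show "\<forall>\<^sub>F p in G. norm (u p ^ d n) \<le> K ^ d n"
      using ub by eventually_elim (simp add: norm_power power_mono)
  qed
  have "(Den \<longlongrightarrow> Bc * 1 + 0) G" unfolding Den_def by (intro tendsto_intros blim Qlim Tu)
  hence Denl: "(Den \<longlongrightarrow> Bc) G" by simp
  have Dnz: "\<forall>\<^sub>F p in G. Den p \<noteq> 0" by (rule tendsto_imp_eventually_ne[OF Denl Bc_nz])
  have main: "\<forall>\<^sub>F p in G. (X p \<noteq> Some 0 \<and> (u p \<noteq> 0 \<longrightarrow> X p = Some (Rfun d n (S (s p)) (T (s p)) (s p) (complex_of_real (sig (s p)) * u p))
              \<and> Rfun d n (S (s p)) (T (s p)) (s p) (complex_of_real (sig (s p)) * u p) \<noteq> 0))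
          \<and> rec (X p) = u p ^ d n / Den p"
    using evp evc ub Dnz
  proof eventually_elim
    case (elim p)
    define s' where "s' = s p"
    define w where "w = complex_of_real (sig s') * u p"
    have s': "0 < s'" "0 < sig s'" "0 < S s'" using elim unfolding s'_def by auto
    have dn0: "d n \<noteq> 0" using dn by simp
    show ?case
    proof (cases "u p = 0")
      case True
      have Snz: "S s' \<noteq> 0" using s' by simp
      have "X p = None" unfolding X_def s'_def[symmetric] using True
        by (simp add: sph_nolim[OF NoLim0[OF s'(1) Snz]])
      thus ?thesis using True dn0 by (simp add: power_0_left)
    next
      case False
      have wnz: "w \<noteq> 0" unfolding w_def using False s' by simp
      have nw: "norm w = sig s' * norm (u p)" unfolding w_def using s' by (simp add: norm_mult)
      have "norm w \<le> K * sig s'" unfolding nw using elim s' unfolding s'_def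
        by (simp add: mult.commute mult_left_mono)
      hence "\<forall>i\<in>{1..n-1}. norm w \<noteq> cc d n s' i" using elim unfolding s'_def by force
      hence XS: "X p = Some (Rfun d n (S s') (T s') s' w)"
        unfolding X_def s'_def[symmetric] w_def[symmetric] by (intro sph_cont Cont s' wnz)
      have "Rfun d n (S s') (T s') s' w = complex_of_real (S s') * P0 s' * Qi s' w / w ^ d n + complex_of_real (T s')"
        by (rule F2[OF s'(1)])
      also have "\<dots> = Den p / u p ^ d n"
        unfolding Den_def s'_def[symmetric] w_def[symmetric] beta_def unfolding w_def
        using False s' by (simp add: power_mult_distrib field_simps)
      finally have Rw: "Rfun d n (S s') (T s') s' w = Den p / u p ^ d n" .
      have Rnz: "Rfun d n (S s') (T s') s' w \<noteq> 0" unfolding Rw using False elim by simp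
      show ?thesis using XS Rw Rnz False unfolding s'_def w_def by simp
    qed
  qed
  thus "\<forall>\<^sub>F p in G. sph_ext (Rfun d n (S (s p)) (T (s p)) (s p)) (Some (complex_of_real (sig (s p)) * u p)) \<noteq> Some 0
        \<and> (u p \<noteq> 0 \<longrightarrow> sph_ext (Rfun d n (S (s p)) (T (s p)) (s p)) (Some (complex_of_real (sig (s p)) * u p))
                 = Some (Rfun d n (S (s p)) (T (s p)) (s p) (complex_of_real (sig (s p)) * u p))
              \<and> Rfun d n (S (s p)) (T (s p)) (s p) (complex_of_real (sig (s p)) * u p) \<noteq> 0)"
    unfolding X_def by (rule eventually_mono) blast
  have "((\<lambda>p. inverse (Den p)) \<longlongrightarrow> inverse Bc) G" by (intro tendsto_intros Denl Bc_nz)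
  hence il: "((\<lambda>p. inverse (Den p) - inverse Bc) \<longlongrightarrow> 0) G"
    using tendsto_diff[of _ "inverse Bc" G "\<lambda>_. inverse Bc" "inverse Bc"] by simp
  have "((\<lambda>p. (inverse (Den p) - inverse Bc) * u p ^ d n) \<longlongrightarrow> 0) G"
  proof (rule ZB[OF il])
    show "\<forall>\<^sub>F p in G. norm (u p ^ d n) \<le> K ^ d n"
      using ub by eventually_elim (simp add: norm_power power_mono)
  qed
  moreover have "\<forall>\<^sub>F p in G. (inverse (Den p) - inverse Bc) * u p ^ d n = rec (X p) - u p ^ d n / Bc"
    using main by eventually_elim (simp add: divide_inverse algebra_simps)
  ultimately show "((\<lambda>p. rec (sph_ext (Rfun d n (S (s p)) (T (s p)) (s p)) (Some (complex_of_real (sig (s p)) * u p)))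
            - u p ^ d n / Bc) \<longlongrightarrow> 0) G"
    unfolding X_def by (rule Lim_transform_eventually)
qed

lemma OUTER:
  fixes s :: "'p \<Rightarrow> real" and z :: "'p \<Rightarrow> complex"
  assumes fs: "filterlim s (at_right 0) G" and r: "r > 0" and lb: "\<forall>\<^sub>F p in G. r \<le> norm (z p)"
  shows "\<forall>\<^sub>F p in G. sph_ext (Rfun d n (S (s p)) (T (s p)) (s p)) (Some (z p)) = Some (Rfun d n (S (s p)) (T (s p)) (s p) (z p))"
    and "((\<lambda>p. Rfun d n (S (s p)) (T (s p)) (s p) (z p) / complex_of_real (sig (s p)) - Vh \<mu> (d 1) k (z p)) \<longlongrightarrow> 0) G"
proof -
  have evp: "\<forall>\<^sub>F p in G. 0 < s p \<and> 0 < sig (s p) \<and> 0 < S (s p) \<and> 0 < T (s p) \<and> 0 < z0 (s p)"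
    by (rule eventually_compose_filterlim[OF evpos fs])
  have evc: "\<forall>\<^sub>F p in G. \<forall>i\<in>{1..n-1}. cc d n (s p) i < r"
    by (rule eventually_compose_filterlim[OF big_r[OF r] fs])
  show "\<forall>\<^sub>F p in G. sph_ext (Rfun d n (S (s p)) (T (s p)) (s p)) (Some (z p)) = Some (Rfun d n (S (s p)) (T (s p)) (s p) (z p))"
    using evp evc lb
  proof eventually_elim
    case (elim p)
    have "z p \<noteq> 0" using elim r by auto
    moreover have "\<forall>i\<in>{1..n-1}. norm (z p) \<noteq> cc d n (s p) i" using elim by force
    ultimately show ?case using elim by (intro sph_cont Cont) auto
  qed
  have Sl: "((\<lambda>p. complex_of_real (S (s p) / sig (s p))) \<longlongrightarrow> complex_of_real \<mu>) G"
    using filterlim_compose[OF limS fs] unfolding sig_def by (intro tendsto_intros)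
  have Tl: "((\<lambda>p. complex_of_real (T (s p) / sig (s p))) \<longlongrightarrow> complex_of_real ((real k - 1) * \<mu>)) G"
    using filterlim_compose[OF limT fs] unfolding sig_def by (intro tendsto_intros)
  have "((\<lambda>p. complex_of_real (S (s p) / sig (s p)) * Qo (s p) (z p) - complex_of_real \<mu>) \<longlongrightarrow> complex_of_real \<mu> * 1 - complex_of_real \<mu>) G"
    by (intro tendsto_intros Sl QoG[OF fs r lb])
  hence f1: "((\<lambda>p. complex_of_real (S (s p) / sig (s p)) * Qo (s p) (z p) - complex_of_real \<mu>) \<longlongrightarrow> 0) G" by simp
  have g1: "((\<lambda>p. (complex_of_real (S (s p) / sig (s p)) * Qo (s p) (z p) - complex_of_real \<mu>) * inverse (z p ^ d 1)) \<longlongrightarrow> 0) G"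
  proof (rule ZB[OF f1])
    show "\<forall>\<^sub>F p in G. norm (inverse (z p ^ d 1)) \<le> inverse (r ^ d 1)"
      using lb
    proof eventually_elim
      case (elim p)
      have "r ^ d 1 \<le> norm (z p) ^ d 1" using elim r by (intro power_mono) auto
      hence "inverse (norm (z p) ^ d 1) \<le> inverse (r ^ d 1)" using r by (intro le_imp_inverse_le) auto
      thus ?case by (simp add: norm_inverse norm_power)
    qed
  qed
  have "((\<lambda>p. complex_of_real (T (s p) / sig (s p)) - complex_of_real ((real k - 1) * \<mu>)) \<longlongrightarrow>
     complex_of_real ((real k - 1) * \<mu>) - complex_of_real ((real k - 1) * \<mu>)) G"
    by (intro tendsto_intros Tl)
  hence g2: "((\<lambda>p. complex_of_real (T (s p) / sig (s p)) - complex_of_real ((real k - 1) * \<mu>)) \<longlongrightarrow> 0) G" by simp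
  have "((\<lambda>p. (complex_of_real (S (s p) / sig (s p)) * Qo (s p) (z p) - complex_of_real \<mu>) * inverse (z p ^ d 1)
     + (complex_of_real (T (s p) / sig (s p)) - complex_of_real ((real k - 1) * \<mu>))) \<longlongrightarrow> 0 + 0) G"
    by (intro tendsto_add g1 g2)
  moreover have "\<forall>\<^sub>F p in G. (complex_of_real (S (s p) / sig (s p)) * Qo (s p) (z p) - complex_of_real \<mu>) * inverse (z p ^ d 1)
     + (complex_of_real (T (s p) / sig (s p)) - complex_of_real ((real k - 1) * \<mu>))
     = Rfun d n (S (s p)) (T (s p)) (s p) (z p) / complex_of_real (sig (s p)) - Vh \<mu> (d 1) k (z p)"
    using evp lb
  proof eventually_elim
    case (elim p)
    have znz: "z p \<noteq> 0" using elim r by auto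
    have sg: "complex_of_real (sig (s p)) \<noteq> 0" using elim by simp
    have sp: "0 < s p" using elim by simp
    show ?case unfolding F1[OF sp znz] Vh_def using elim znz sg
      by (simp add: field_simps)
  qed
  ultimately show "((\<lambda>p. Rfun d n (S (s p)) (T (s p)) (s p) (z p) / complex_of_real (sig (s p)) - Vh \<mu> (d 1) k (z p)) \<longlongrightarrow> 0) G"
    by (simp add: Lim_transform_eventually)
qed

end



lemma fst_prod: "filterlim fst F (F \<times>\<^sub>F principal A)"
  unfolding filterlim_iff
proof (intro allI impI)
  fix P assume "eventually P F"
  thus "\<forall>\<^sub>F x in F \<times>\<^sub>F principal A. P (fst x)"
    unfolding eventually_prod_filter by (intro exI[of _ P] exI[of _ "\<lambda>_. True"]) auto
qed

lemma snd_prod_ev: "\<forall>\<^sub>F p in (F \<times>\<^sub>F principal A). snd p \<in> A"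
  unfolding eventually_prod_filter
  by (intro exI[of _ "\<lambda>_. True"] exI[of _ "\<lambda>y. y \<in> A"]) (auto simp: eventually_principal)

lemma prod_unif: "\<forall>\<^sub>F p in (F \<times>\<^sub>F principal A). P p \<Longrightarrow> \<forall>\<^sub>F s in F. \<forall>z\<in>A. P (s, z)"
  unfolding eventually_prod_filter
proof (elim exE conjE)
  fix Pf Pg assume "eventually Pf F" "eventually Pg (principal A)" "\<forall>x y. Pf x \<longrightarrow> Pg y \<longrightarrow> P (x, y)"
  thus "\<forall>\<^sub>F s in F. \<forall>z\<in>A. P (s, z)"
    by (auto simp: eventually_principal elim!: eventually_mono)
qed

lemma ev_small: "(f \<longlongrightarrow> 0) G \<Longrightarrow> e > 0 \<Longrightarrow> \<forall>\<^sub>F p in G. norm (f p :: complex) < e"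
  by (drule tendstoD) (auto simp: dist_norm)

lemma cdist_small:
  assumes "((\<lambda>p. rec (X p) - rec (Y p)) \<longlongrightarrow> 0) G" "\<forall>\<^sub>F p in G. X p \<noteq> Some 0 \<and> Y p \<noteq> Some 0" "e > 0"
  shows "\<forall>\<^sub>F p in G. cdist (X p) (Y p) < e"
proof -
  have "\<forall>\<^sub>F p in G. norm (rec (X p) - rec (Y p)) < e/2" using assms(1,3) by (intro ev_small) auto
  thus ?thesis using assms(2)
  proof eventually_elim
    case (elim p)
    thus ?case using cdist_rec[of "X p" "Y p"] by linarith
  qed
qed

lemma bounded_of_close:
  assumes "((\<lambda>p. f p - g p) \<longlongrightarrow> 0) G" "\<forall>\<^sub>F p in G. norm (g p :: complex) \<le> M"
  shows "\<forall>\<^sub>F p in G. norm (f p) \<le> M + 1"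
proof -
  have "\<forall>\<^sub>F p in G. norm (f p - g p) < 1" by (rule ev_small[OF assms(1)]) simp
  thus ?thesis using assms(2)
  proof eventually_elim
  case (elim p)
  have "norm (f p) \<le> norm (f p - g p) + norm (g p)" using norm_triangle_ineq[of "f p - g p" "g p"] by simp
  thus ?case using elim by linarith
qed
qed

lemma diff0_trans:
  assumes "((\<lambda>p. f p - g p) \<longlongrightarrow> 0) G" "((\<lambda>p. g p - h p) \<longlongrightarrow> 0) G"
  shows "((\<lambda>p. f p - h p :: complex) \<longlongrightarrow> 0) G"
  using tendsto_add[OF assms] by simp

context Lz begin

lemma nk: "norm (complex_of_real ((real k - 1) * \<mu>)) = (real k - 1) * \<mu>"
  by (rule norm_of_real[THEN trans]) (rule abs_of_pos[OF kmu(2)])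

lemma Vh_bound: "r > 0 \<Longrightarrow> r \<le> norm z \<Longrightarrow> norm (Vh \<mu> (d 1) k z) \<le> \<mu> / r ^ d 1 + (real k - 1) * \<mu>"
proof -
  assume r: "r > 0" "r \<le> norm z"
  have "norm (Vh \<mu> (d 1) k z) \<le> norm (complex_of_real \<mu> / z ^ d 1) + norm (complex_of_real ((real k - 1) * \<mu>))"
    unfolding Vh_def by (rule norm_triangle_ineq)
  also have "norm (complex_of_real \<mu> / z ^ d 1) = \<mu> / norm z ^ d 1"
    using mu_pos by (simp add: norm_divide norm_power)
  also have "\<mu> / norm z ^ d 1 \<le> \<mu> / r ^ d 1"
    using r mu_pos by (intro divide_left_mono power_mono mult_pos_pos zero_less_power) auto
  also note nk
  finally show ?thesis by simp
qed

abbreviation "RR s \<equiv> Rfun d n (S s) (T s) s"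

lemma part1_some: assumes r: "r > 0" and e: "e > 0"
  shows "\<forall>\<^sub>F s in at_right 0. \<forall>z. r \<le> norm z \<longrightarrow>
     cdist (sph_ext (RR s) (sph_ext (RR s) (Some z))) (sph_ext (h2 (d 1) (d n)) (Some z)) < e"
proof -
  define A where "A = {z::complex. r \<le> norm z}"
  define G where "G = at_right (0::real) \<times>\<^sub>F principal A"
  have fs: "filterlim fst (at_right 0) G" unfolding G_def by (rule fst_prod)
  have lb: "\<forall>\<^sub>F p in G. r \<le> norm (snd p)" using snd_prod_ev[where F="at_right 0" and A=A] unfolding G_def A_def by simp
  define u where "u p = RR (fst p) (snd p) / complex_of_real (sig (fst p))" for p
  note O1 = OUTER(1)[OF fs r lb] and O2 = OUTER(2)[OF fs r lb]
  have O2': "((\<lambda>p. u p - Vh \<mu> (d 1) k (snd p)) \<longlongrightarrow> 0) G" using O2 unfolding u_def .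
  define MV where "MV = \<mu> / r ^ d 1 + (real k - 1) * \<mu>"
  have MV0: "MV \<ge> 0" unfolding MV_def using mu_pos kmu r by (intro add_nonneg_nonneg) auto
  have Vb: "\<forall>\<^sub>F p in G. norm (Vh \<mu> (d 1) k (snd p)) \<le> MV"
    using lb by eventually_elim (unfold MV_def, rule Vh_bound[OF r])
  have ub: "\<forall>\<^sub>F p in G. norm (u p) \<le> MV + 1" by (rule bounded_of_close[OF O2' Vb])
  have K0: "MV + 1 \<ge> 0" using MV0 by simp
  note I1 = INNER(1)[OF fs K0 ub] and I2 = INNER(2)[OF fs K0 ub]
  have evp: "\<forall>\<^sub>F p in G. 0 < fst p \<and> 0 < sig (fst p) \<and> 0 < S (fst p) \<and> 0 < T (fst p) \<and> 0 < z0 (fst p)"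
    by (rule eventually_compose_filterlim[OF evpos fs])
  have su: "\<forall>\<^sub>F p in G. complex_of_real (sig (fst p)) * u p = RR (fst p) (snd p)"
    using evp by eventually_elim (simp add: u_def)
  define X where "X p = sph_ext (RR (fst p)) (sph_ext (RR (fst p)) (Some (snd p)))" for p
  define Y where "Y p = sph_ext (h2 (d 1) (d n)) (Some (snd p))" for p :: "real \<times> complex"
  have XE: "\<forall>\<^sub>F p in G. X p = sph_ext (RR (fst p)) (Some (complex_of_real (sig (fst p)) * u p))"
    using O1 su by eventually_elim (simp add: X_def)
  have YE: "\<forall>\<^sub>F p in G. rec (Y p) = Vh \<mu> (d 1) k (snd p) ^ d n / Bc \<and> Y p \<noteq> Some 0"
    using lb
  proof eventually_elim
    case (elim p)
    have "snd p \<noteq> 0" using elim r by auto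
    thus ?case unfolding Y_def Bc_def using H[of "d 1" "d n" \<mu> "snd p"] d1 dn k_ge mu_pos by auto
  qed
  have "((\<lambda>p. u p ^ d n - Vh \<mu> (d 1) k (snd p) ^ d n) \<longlongrightarrow> 0) G"
  proof (rule PD[OF O2'])
    show "\<forall>\<^sub>F p in G. norm (u p) \<le> MV + 1 \<and> norm (Vh \<mu> (d 1) k (snd p)) \<le> MV + 1"
      using ub Vb by eventually_elim auto
  qed
  hence "((\<lambda>p. (u p ^ d n - Vh \<mu> (d 1) k (snd p) ^ d n) * inverse Bc) \<longlongrightarrow> 0 * inverse Bc) G"
    by (intro tendsto_intros)
  hence P2: "((\<lambda>p. u p ^ d n / Bc - Vh \<mu> (d 1) k (snd p) ^ d n / Bc) \<longlongrightarrow> 0) G"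
    by (simp add: divide_inverse algebra_simps)
  have "((\<lambda>p. rec (sph_ext (RR (fst p)) (Some (complex_of_real (sig (fst p)) * u p))) - Vh \<mu> (d 1) k (snd p) ^ d n / Bc) \<longlongrightarrow> 0) G"
    by (rule diff0_trans[OF I2 P2])
  moreover have "\<forall>\<^sub>F p in G. rec (sph_ext (RR (fst p)) (Some (complex_of_real (sig (fst p)) * u p))) - Vh \<mu> (d 1) k (snd p) ^ d n / Bc
      = rec (X p) - rec (Y p)"
    using XE YE by eventually_elim simp
  ultimately have lim: "((\<lambda>p. rec (X p) - rec (Y p)) \<longlongrightarrow> 0) G" by (rule Lim_transform_eventually)
  have nz: "\<forall>\<^sub>F p in G. X p \<noteq> Some 0 \<and> Y p \<noteq> Some 0"
    using XE YE I1 by eventually_elim auto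
  have "\<forall>\<^sub>F p in G. cdist (X p) (Y p) < e" by (rule cdist_small[OF lim nz e])
  hence "\<forall>\<^sub>F s in at_right 0. \<forall>z\<in>A. cdist (X (s, z)) (Y (s, z)) < e" unfolding G_def by (rule prod_unif)
  thus ?thesis unfolding X_def Y_def A_def by (auto elim!: eventually_mono)
qed

lemma part1_none: assumes e: "e > 0"
  shows "\<forall>\<^sub>F s in at_right 0.
     cdist (sph_ext (RR s) (sph_ext (RR s) None)) (sph_ext (h2 (d 1) (d n)) None) < e"
proof -
  define G where "G = at_right (0::real)"
  have fs: "filterlim (\<lambda>s. s) (at_right 0) G" unfolding G_def by (rule filterlim_ident)
  define u where "u s = complex_of_real (T s / sig s)" for s
  have ul: "(u \<longlongrightarrow> complex_of_real ((real k - 1) * \<mu>)) G"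
    unfolding u_def G_def using limT unfolding sig_def[symmetric] by (intro tendsto_intros)
  have ul0: "((\<lambda>s. u s - complex_of_real ((real k - 1) * \<mu>)) \<longlongrightarrow> 0) G"
    using tendsto_diff[OF ul tendsto_const[of "complex_of_real ((real k - 1) * \<mu>)"]] by simp
  have ub: "\<forall>\<^sub>F s in G. norm (u s) \<le> (real k - 1) * \<mu> + 1"
    by (rule bounded_of_close[OF ul0 always_eventually]) (intro allI eq_refl[OF nk])
  have K0: "(real k - 1) * \<mu> + 1 \<ge> 0" using kmu by simp
  note I1 = INNER(1)[OF fs K0 ub] and I2 = INNER(2)[OF fs K0 ub]
  have evp: "\<forall>\<^sub>F s in G. 0 < s \<and> 0 < sig s \<and> 0 < S s \<and> 0 < T s \<and> 0 < z0 s" using evpos unfolding G_def .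
  have XE: "\<forall>\<^sub>F s in G. sph_ext (RR s) (sph_ext (RR s) None) = sph_ext (RR s) (Some (complex_of_real (sig s) * u s))"
    using evp
  proof eventually_elim
    case (elim s)
    have "sig s * (T s / sig s) = T s" using elim by simp
    hence "complex_of_real (sig s) * u s = complex_of_real (T s)"
      unfolding u_def by (metis of_real_mult)
    thus ?case using sph_inf[OF Inf[of s "S s" "T s"]] elim by simp
  qed
  have YE: "sph_ext (h2 (d 1) (d n)) None = Some (inverse (complex_of_real ((real k - 1) * \<mu>) ^ d n / Bc))"
    unfolding Bc_def using H_inf[of "d 1" "d n" \<mu>] d1 dn k_ge mu_pos by simp
  have Yne: "complex_of_real ((real k - 1) * \<mu>) ^ d n / Bc \<noteq> 0"
    by (metis divide_eq_0_iff power_eq_0_iff Bc_nz Bnz2[OF k_ge mu_pos])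
  have "((\<lambda>s. u s ^ d n / Bc) \<longlongrightarrow> complex_of_real ((real k - 1) * \<mu>) ^ d n / Bc) G"
    by (intro tendsto_intros ul Bc_nz)
  hence P2: "((\<lambda>s. u s ^ d n / Bc - complex_of_real ((real k - 1) * \<mu>) ^ d n / Bc) \<longlongrightarrow> 0) G"
    by (rule LIM_zero)
  have lim0: "((\<lambda>s. rec (sph_ext (RR s) (Some (complex_of_real (sig s) * u s))) - complex_of_real ((real k - 1) * \<mu>) ^ d n / Bc) \<longlongrightarrow> 0) G"
    by (rule diff0_trans[OF I2 P2])
  have lim: "((\<lambda>s. rec (sph_ext (RR s) (sph_ext (RR s) None)) - rec (sph_ext (h2 (d 1) (d n)) None)) \<longlongrightarrow> 0) G"
    using lim0 XE unfolding YE by (auto intro: Lim_transform_eventually elim!: eventually_mono)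
  have nz: "\<forall>\<^sub>F s in G. sph_ext (RR s) (sph_ext (RR s) None) \<noteq> Some 0 \<and> sph_ext (h2 (d 1) (d n)) None \<noteq> Some 0"
    using XE I1 unfolding YE
  proof eventually_elim
    case (elim s) thus ?case using Yne by auto
  qed
  show ?thesis using cdist_small[OF lim nz e] unfolding G_def .
qed

end



context Lz begin

lemma k_pos: "k > 0" using d1 dn by simp

lemma h1_rec: assumes z: "z \<noteq> 0"
  shows "rec (sph_ext (h1 k) (Some z)) = Vh (1 / real k) k k z \<and> sph_ext (h1 k) (Some z) \<noteq> Some 0"
proof -
  have kk: "k * 1 \<ge> 2" using k_ge by simp
  have mu': "1 / real k > 0" using k_pos by simp
  have e: "real (k * 1) * (1 / real k) = 1" using k_pos by simp
  show ?thesis using H[OF k_pos _ kk mu' z] unfolding h1_h2 e by simp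
qed

lemma h1_none:
  "sph_ext (h1 k) None = Some (inverse (complex_of_real ((real k - 1) * \<mu>) / complex_of_real (real k * \<mu>)))"
proof -
  have kk: "k * 1 \<ge> 2" using k_ge by simp
  have mu': "1 / real k > 0" using k_pos by simp
  have e: "real (k * 1) * (1 / real k) = 1" using k_pos by simp
  have "(real k - 1) * \<mu> / (real k * \<mu>) = (real k - 1) * (1 / real k)" using mu_pos k_pos by simp
  hence e2: "complex_of_real ((real k - 1) * \<mu>) / complex_of_real (real k * \<mu>) = complex_of_real ((real k - 1) * (1 / real k))"
    by (metis of_real_divide)
  show ?thesis using H_inf[OF k_pos _ kk mu'] unfolding h1_h2 e e2 by simp
qed

lemma comp_psi: "z \<noteq> 0 \<Longrightarrow> (psi z \<circ> Rx \<circ> psi z) ((psi z \<circ> Rx \<circ> psi z) w) = psi z (Rx (Rx (psi z w)))"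
  by (simp add: psi_psi)

lemma part2_none: assumes e: "e > 0"
  shows "\<forall>\<^sub>F s in at_right 0.
     cdist (psi (z0 s) (sph_ext (RR s) (sph_ext (RR s) (psi (z0 s) None)))) (sph_ext (h1 k) None) < e"
proof -
  define G where "G = at_right (0::real)"
  have evp: "\<forall>\<^sub>F s in G. 0 < s \<and> 0 < sig s \<and> 0 < S s \<and> 0 < T s \<and> 0 < z0 s" using evpos unfolding G_def .
  define F where "F s = psi (z0 s) (sph_ext (RR s) (sph_ext (RR s) (psi (z0 s) None)))" for s
  have FE: "\<forall>\<^sub>F s in G. rec (F s) = complex_of_real (T s / sig s) / complex_of_real (z0 s / sig s) \<and> F s \<noteq> Some 0"
    using evp
  proof eventually_elim
    case (elim s)
    have Snz: "S s \<noteq> 0" using elim by simp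
    have z0nz: "z0 s \<noteq> 0" using elim by simp
    have s0: "0 < s" using elim by simp
    have "F s = psi (z0 s) (Some (complex_of_real (T s)))"
      unfolding F_def psi_none sph_nolim[OF NoLim0[OF s0 Snz]] sph_inf[OF Inf[OF s0]] ..
    moreover have "T s / sig s / (z0 s / sig s) = T s / z0 s" using elim by simp
    hence "complex_of_real (T s / sig s) / complex_of_real (z0 s / sig s) = complex_of_real (T s) / complex_of_real (z0 s)"
      by (metis of_real_divide)
    ultimately show ?case using psi_rec[OF z0nz, of "complex_of_real (T s)"] by auto
  qed
  have "((\<lambda>s. complex_of_real (T s / sig s) / complex_of_real (z0 s / sig s)) \<longlongrightarrow>
       complex_of_real ((real k - 1) * \<mu>) / complex_of_real (real k * \<mu>)) G"
    unfolding G_def using limT limz kmu d1 dn unfolding sig_def[symmetric] by (intro tendsto_intros) auto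
  hence "((\<lambda>s. complex_of_real (T s / sig s) / complex_of_real (z0 s / sig s) -
       complex_of_real ((real k - 1) * \<mu>) / complex_of_real (real k * \<mu>)) \<longlongrightarrow> 0) G"
    by (rule LIM_zero)
  moreover have "\<forall>\<^sub>F s in G. complex_of_real (T s / sig s) / complex_of_real (z0 s / sig s) -
       complex_of_real ((real k - 1) * \<mu>) / complex_of_real (real k * \<mu>) = rec (F s) - rec (sph_ext (h1 k) None)"
    using FE unfolding h1_none by eventually_elim simp
  ultimately have lim: "((\<lambda>s. rec (F s) - rec (sph_ext (h1 k) None)) \<longlongrightarrow> 0) G"
    by (rule Lim_transform_eventually)
  have ne: "complex_of_real ((real k - 1) * \<mu>) / complex_of_real (real k * \<mu>) \<noteq> 0"
    using Bnz2[OF k_ge mu_pos] Bnz[OF k_ge mu_pos, of 1] by simp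
  have nz: "\<forall>\<^sub>F s in G. F s \<noteq> Some 0 \<and> sph_ext (h1 k) None \<noteq> Some 0"
    using FE
  proof eventually_elim
    case (elim s) thus ?case unfolding h1_none using ne by simp
  qed
  show ?thesis using cdist_small[OF lim nz e] unfolding G_def F_def .
qed

end



context Lz begin

lemma part2_some: assumes r: "r > 0" and e: "e > 0"
  shows "\<forall>\<^sub>F s in at_right 0. \<forall>z. r \<le> norm z \<longrightarrow>
     cdist (psi (z0 s) (sph_ext (RR s) (sph_ext (RR s) (psi (z0 s) (Some z))))) (sph_ext (h1 k) (Some z)) < e"
proof -
  define A where "A = {z::complex. r \<le> norm z}"
  define G where "G = at_right (0::real) \<times>\<^sub>F principal A"
  have fs: "filterlim fst (at_right 0) G" unfolding G_def by (rule fst_prod)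
  have lb: "\<forall>\<^sub>F p in G. r \<le> norm (snd p)" using snd_prod_ev[where F="at_right 0" and A=A] unfolding G_def A_def by simp
  have evp: "\<forall>\<^sub>F p in G. 0 < fst p \<and> 0 < sig (fst p) \<and> 0 < S (fst p) \<and> 0 < T (fst p) \<and> 0 < z0 (fst p)"
    by (rule eventually_compose_filterlim[OF evpos fs])
  define kmc where "kmc = complex_of_real (real k * \<mu>)"
  have kmc_nz: "kmc \<noteq> 0" unfolding kmc_def using Bnz[OF k_ge mu_pos, of 1] by simp
  have nkmc: "norm kmc = real k * \<mu>" unfolding kmc_def by (rule norm_of_real[THEN trans]) (rule abs_of_pos[OF kmu(1)])
  have Bck: "Bc = kmc ^ d n" unfolding Bc_def kmc_def by (simp add: of_real_power)
  define Z where "Z p = complex_of_real (z0 (fst p) / sig (fst p))" for p :: "real \<times> complex"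
  have Zl: "(Z \<longlongrightarrow> kmc) G" unfolding Z_def kmc_def
    using filterlim_compose[OF limz fs] unfolding sig_def by (intro tendsto_intros)
  have Zb: "\<forall>\<^sub>F p in G. norm (Z p) \<le> real k * \<mu> + 1"
    by (rule bounded_of_close[OF LIM_zero[OF Zl] always_eventually]) (intro allI eq_refl[OF nkmc])
  define u where "u p = Z p / snd p" for p
  define K where "K = (real k * \<mu> + 1) / r"
  have K0: "K \<ge> 0" unfolding K_def using kmu r by simp
  have ub: "\<forall>\<^sub>F p in G. norm (u p) \<le> K"
    using Zb lb
  proof eventually_elim
    case (elim p)
    have "norm (u p) = norm (Z p) / norm (snd p)" unfolding u_def by (simp add: norm_divide)
    also have "\<dots> \<le> (real k * \<mu> + 1) / r" using elim r kmu by (intro frac_le) auto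
    finally show ?case unfolding K_def .
  qed
  note I1 = INNER(1)[OF fs K0 ub] and I2 = INNER(2)[OF fs K0 ub]
  define y where "y p = RR (fst p) (complex_of_real (sig (fst p)) * u p)" for p
  define X1 where "X1 p = sph_ext (RR (fst p)) (Some (complex_of_real (sig (fst p)) * u p))" for p
  have psiE: "\<forall>\<^sub>F p in G. psi (z0 (fst p)) (Some (snd p)) = Some (complex_of_real (sig (fst p)) * u p) \<and> u p \<noteq> 0"
    using evp lb
  proof eventually_elim
    case (elim p)
    have znz: "snd p \<noteq> 0" using elim r by auto
    have z0nz: "z0 (fst p) \<noteq> 0" using elim by simp
    have "sig (fst p) * (z0 (fst p) / sig (fst p)) = z0 (fst p)" using elim by simp
    hence "complex_of_real (sig (fst p)) * Z p = complex_of_real (z0 (fst p))" unfolding Z_def by (metis of_real_mult)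
    hence "complex_of_real (sig (fst p)) * u p = complex_of_real (z0 (fst p)) / snd p"
      unfolding u_def by (metis times_divide_eq_right)
    moreover have "u p \<noteq> 0" unfolding u_def Z_def using elim znz by simp
    ultimately show ?case using psi_some[OF z0nz znz] by simp
  qed
  have X1E: "\<forall>\<^sub>F p in G. X1 p = Some (y p) \<and> y p \<noteq> 0 \<and> rec (X1 p) = inverse (y p)"
    using I1 psiE unfolding X1_def y_def by eventually_elim auto
  have iy: "((\<lambda>p. inverse (y p) - u p ^ d n / Bc) \<longlongrightarrow> 0) G"
    using I2 X1E unfolding X1_def[symmetric]
    by (auto intro: Lim_transform_eventually elim!: eventually_mono)
  define M0 where "M0 = K ^ d n / norm Bc"
  have ub2: "\<forall>\<^sub>F p in G. norm (u p ^ d n / Bc) \<le> M0"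
    using ub by eventually_elim (unfold M0_def, auto simp: norm_divide norm_power intro!: divide_right_mono power_mono)
  have iyb: "\<forall>\<^sub>F p in G. norm (inverse (y p)) \<le> M0 + 1" by (rule bounded_of_close[OF iy ub2])
  have M00: "M0 \<ge> 0" unfolding M0_def using K0 by simp
  define m where "m = inverse (M0 + 1)"
  have m0: "m > 0" unfolding m_def using M00 by simp
  have ylb: "\<forall>\<^sub>F p in G. m \<le> norm (y p)"
    using iyb X1E
  proof eventually_elim
    case (elim p)
    have "inverse (norm (y p)) \<le> M0 + 1" using elim by (simp add: norm_inverse)
    hence "inverse (M0 + 1) \<le> inverse (inverse (norm (y p)))" using elim M00
      by (intro le_imp_inverse_le) auto
    thus ?case unfolding m_def by simp
  qed
  note O1 = OUTER(1)[OF fs m0 ylb] and O2 = OUTER(2)[OF fs m0 ylb]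
  define Fp where "Fp p = psi (z0 (fst p)) (sph_ext (RR (fst p)) (sph_ext (RR (fst p)) (psi (z0 (fst p)) (Some (snd p)))))" for p
  define Yt where "Yt p = sph_ext (h1 k) (Some (snd p))" for p :: "real \<times> complex"
  define Ap where "Ap p = RR (fst p) (y p) / complex_of_real (sig (fst p))" for p
  have FE: "\<forall>\<^sub>F p in G. rec (Fp p) = Ap p / Z p \<and> Fp p \<noteq> Some 0"
    using psiE X1E O1 evp
  proof eventually_elim
    case (elim p)
    have z0nz: "z0 (fst p) \<noteq> 0" using elim by simp
    have "Fp p = psi (z0 (fst p)) (Some (RR (fst p) (y p)))"
      unfolding Fp_def using elim unfolding X1_def by simp
    moreover have "sig (fst p) * (z0 (fst p) / sig (fst p)) = z0 (fst p)" using elim by simp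
    hence "complex_of_real (sig (fst p)) * Z p = complex_of_real (z0 (fst p))" unfolding Z_def by (metis of_real_mult)
    hence "RR (fst p) (y p) / complex_of_real (z0 (fst p)) = Ap p / Z p"
      unfolding Ap_def using elim by (metis divide_divide_eq_left)
    ultimately show ?case using psi_rec[OF z0nz, of "RR (fst p) (y p)"] by simp
  qed
  have YE: "\<forall>\<^sub>F p in G. rec (Yt p) = Vh (1 / real k) k k (snd p) \<and> Yt p \<noteq> Some 0"
    using lb
  proof eventually_elim
    case (elim p)
    have "snd p \<noteq> 0" using elim r by auto
    thus ?case unfolding Yt_def by (rule h1_rec)
  qed
  define Bp where "Bp p = complex_of_real \<mu> * inverse (snd p) ^ k + complex_of_real ((real k - 1) * \<mu>)" for p :: "real \<times> complex"
  have zi: "\<forall>\<^sub>F p in G. norm (inverse (snd p) ^ d n) \<le> inverse (r ^ d n)"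
    using lb
  proof eventually_elim
    case (elim p)
    have "r ^ d n \<le> norm (snd p) ^ d n" using elim r by (intro power_mono) auto
    hence "inverse (norm (snd p) ^ d n) \<le> inverse (r ^ d n)" using r by (intro le_imp_inverse_le) auto
    thus ?case by (simp add: norm_inverse norm_power power_inverse)
  qed
  have "((\<lambda>p. Z p ^ d n / Bc - 1) \<longlongrightarrow> kmc ^ d n / Bc - 1) G" by (intro tendsto_intros Zl Bc_nz)
  hence "((\<lambda>p. Z p ^ d n / Bc - 1) \<longlongrightarrow> 0) G" using Bc_nz kmc_nz unfolding Bck by simp
  hence "((\<lambda>p. (Z p ^ d n / Bc - 1) * inverse (snd p) ^ d n) \<longlongrightarrow> 0) G" by (rule ZB[OF _ zi])
  moreover have "\<forall>\<^sub>F p in G. (Z p ^ d n / Bc - 1) * inverse (snd p) ^ d n = u p ^ d n / Bc - inverse (snd p) ^ d n"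
    by (rule always_eventually) (simp add: u_def divide_inverse power_mult_distrib algebra_simps)
  ultimately have a: "((\<lambda>p. u p ^ d n / Bc - inverse (snd p) ^ d n) \<longlongrightarrow> 0) G"
    by (rule Lim_transform_eventually)
  have b: "((\<lambda>p. inverse (y p) - inverse (snd p) ^ d n) \<longlongrightarrow> 0) G" by (rule diff0_trans[OF iy a])
  have c: "((\<lambda>p. inverse (y p) ^ d 1 - (inverse (snd p) ^ d n) ^ d 1) \<longlongrightarrow> 0) G"
  proof (rule PD[OF b])
    show "\<forall>\<^sub>F p in G. norm (inverse (y p)) \<le> M0 + 1 + inverse (r ^ d n) \<and> norm (inverse (snd p) ^ d n) \<le> M0 + 1 + inverse (r ^ d n)"
      using iyb zi
    proof eventually_elim
      case (elim p)
      have "0 \<le> inverse (r ^ d n)" using r by simp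
      thus ?case using elim M00 by linarith
    qed
  qed
  have pw: "\<And>p::real\<times>complex. (inverse (snd p) ^ d n) ^ d 1 = inverse (snd p) ^ k"
  proof -
    fix p :: "real \<times> complex"
    have "(inverse (snd p) ^ d n) ^ d 1 = inverse (snd p) ^ (d n * d 1)" by (simp only: power_mult)
    also have "d n * d 1 = k" by (rule mult.commute)
    finally show "(inverse (snd p) ^ d n) ^ d 1 = inverse (snd p) ^ k" .
  qed
  have "((\<lambda>p. complex_of_real \<mu> * (inverse (y p) ^ d 1 - inverse (snd p) ^ k)) \<longlongrightarrow> complex_of_real \<mu> * 0) G"
    using c unfolding pw by (intro tendsto_intros)
  moreover have "\<forall>\<^sub>F p in G. complex_of_real \<mu> * (inverse (y p) ^ d 1 - inverse (snd p) ^ k) = Vh \<mu> (d 1) k (y p) - Bp p"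
    by (rule always_eventually) (simp add: Vh_def Bp_def divide_inverse power_inverse algebra_simps)
  ultimately have ee: "((\<lambda>p. Vh \<mu> (d 1) k (y p) - Bp p) \<longlongrightarrow> 0) G"
    by (auto intro: Lim_transform_eventually)
  have f: "((\<lambda>p. Ap p - Bp p) \<longlongrightarrow> 0) G" unfolding Ap_def by (rule diff0_trans[OF O2 ee])
  have iZ: "((\<lambda>p. inverse (Z p)) \<longlongrightarrow> inverse kmc) G" by (intro tendsto_intros Zl kmc_nz)
  have iZb: "\<forall>\<^sub>F p in G. norm (inverse (Z p)) \<le> norm (inverse kmc) + 1"
    by (rule bounded_of_close[OF LIM_zero[OF iZ] always_eventually]) simp
  have Bpb: "\<forall>\<^sub>F p in G. norm (Bp p) \<le> \<mu> * inverse (r ^ k) + (real k - 1) * \<mu>"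
    using lb
  proof eventually_elim
    case (elim p)
    have "r ^ k \<le> norm (snd p) ^ k" using elim r by (intro power_mono) auto
    hence iv: "inverse (norm (snd p) ^ k) \<le> inverse (r ^ k)" using r by (intro le_imp_inverse_le) auto
    have "norm (Bp p) \<le> norm (complex_of_real \<mu> * inverse (snd p) ^ k) + norm (complex_of_real ((real k - 1) * \<mu>))"
      unfolding Bp_def by (rule norm_triangle_ineq)
    also have "norm (complex_of_real \<mu> * inverse (snd p) ^ k) = \<mu> * inverse (norm (snd p) ^ k)"
      using mu_pos by (simp add: norm_mult norm_power norm_inverse power_inverse)
    also have "\<dots> \<le> \<mu> * inverse (r ^ k)" using iv mu_pos by (intro mult_left_mono) auto
    also note nk
    finally show ?case by simp
  qed
  have h1: "((\<lambda>p. (Ap p - Bp p) * inverse (Z p)) \<longlongrightarrow> 0) G" by (rule ZB[OF f iZb])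
  have "((\<lambda>p. inverse (Z p) - inverse kmc) \<longlongrightarrow> 0) G" by (rule LIM_zero[OF iZ])
  hence h2: "((\<lambda>p. (inverse (Z p) - inverse kmc) * Bp p) \<longlongrightarrow> 0) G" by (rule ZB[OF _ Bpb])
  have "((\<lambda>p. (Ap p - Bp p) * inverse (Z p) + (inverse (Z p) - inverse kmc) * Bp p) \<longlongrightarrow> 0 + 0) G"
    by (rule tendsto_add[OF h1 h2])
  moreover have "\<forall>\<^sub>F p in G. (Ap p - Bp p) * inverse (Z p) + (inverse (Z p) - inverse kmc) * Bp p
      = rec (Fp p) - rec (Yt p)"
    using FE YE lb
  proof eventually_elim
    case (elim p)
    have znz: "snd p \<noteq> 0" using elim r by auto
    have "Vh (1 / real k) k k (snd p) = Bp p / kmc"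
      unfolding Vh_def Bp_def kmc_def using mu_pos k_pos znz
      by (simp add: field_simps power_inverse)
    thus ?case using elim by (simp add: divide_inverse algebra_simps)
  qed
  ultimately have lim: "((\<lambda>p. rec (Fp p) - rec (Yt p)) \<longlongrightarrow> 0) G"
    by (auto intro: Lim_transform_eventually)
  have nz: "\<forall>\<^sub>F p in G. Fp p \<noteq> Some 0 \<and> Yt p \<noteq> Some 0" using FE YE by eventually_elim auto
  have "\<forall>\<^sub>F p in G. cdist (Fp p) (Yt p) < e" by (rule cdist_small[OF lim nz e])
  hence "\<forall>\<^sub>F s in at_right 0. \<forall>z\<in>A. cdist (Fp (s, z)) (Yt (s, z)) < e" unfolding G_def by (rule prod_unif)
  thus ?thesis unfolding Fp_def Yt_def A_def by (auto elim!: eventually_mono)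
qed

end


theorem lemma4p2:
  fixes d :: "nat \<Rightarrow> nat" and n :: nat
    and S T z0 :: "real \<Rightarrow> real"
  assumes n3: "n \<ge> 3" and nodd: "odd n"
    and dpos: "\<forall>i\<in>{1..n}. d i > 0"
    and dsum: "(\<Sum>i\<in>{1..n}. 1 / real (d i)) < 1"
    and eqs: "\<forall>\<^sub>F s in at_right 0.
        Rfun d n (S s) (T s) s 1 = complex_of_real (z0 s)
      \<and> Rfun d n (S s) (T s) s (complex_of_real (z0 s)) = 1
      \<and> (\<exists>a b. (Rfun d n (S s) (T s) s has_field_derivative a) (at 1)
             \<and> (Rfun d n (S s) (T s) s has_field_derivative b) (at (complex_of_real (z0 s)))
             \<and> a * b = 1)"
    and limS: "((\<lambda>s. S s / s powr nu d n) \<longlongrightarrow> mu d n) (at_right 0)"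
    and limT: "((\<lambda>s. T s / s powr nu d n) \<longlongrightarrow> (real (d 1 * d n) - 1) * mu d n) (at_right 0)"
    and limz: "((\<lambda>s. z0 s / s powr nu d n) \<longlongrightarrow> real (d 1 * d n) * mu d n) (at_right 0)"
  shows
    "(\<forall>r>0. \<forall>\<epsilon>>0. \<forall>\<^sub>F s in at_right 0. \<forall>w.
        (w = None \<or> (\<exists>z. w = Some z \<and> norm z \<ge> r)) \<longrightarrow>
        cdist (sph_ext (Rfun d n (S s) (T s) s) (sph_ext (Rfun d n (S s) (T s) s) w))
              (sph_ext (h2 (d 1) (d n)) w) < \<epsilon>)
   \<and> (\<forall>r>0. \<forall>\<epsilon>>0. \<forall>\<^sub>F s in at_right 0. \<forall>w.
        (w = None \<or> (\<exists>z. w = Some z \<and> norm z \<ge> r)) \<longrightarrow>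
        cdist ((psi (z0 s) \<circ> sph_ext (Rfun d n (S s) (T s) s) \<circ> psi (z0 s))
                 ((psi (z0 s) \<circ> sph_ext (Rfun d n (S s) (T s) s) \<circ> psi (z0 s)) w))
              (sph_ext (h1 (d 1 * d n)) w) < \<epsilon>)"
proof -
  interpret Lz d n S T z0
  proof unfold_locales
    show "\<forall>\<^sub>F s in at_right 0. Rfun d n (S s) (T s) s (complex_of_real (z0 s)) = 1"
      using eqs by (rule eventually_mono) blast
  qed (use assms in auto)
  show ?thesis
  proof (intro conjI allI impI)
    fix r \<epsilon> :: real assume r: "r > 0" and e: "\<epsilon> > 0"
    show "\<forall>\<^sub>F s in at_right 0. \<forall>w.
        (w = None \<or> (\<exists>z. w = Some z \<and> norm z \<ge> r)) \<longrightarrow>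
        cdist (sph_ext (Rfun d n (S s) (T s) s) (sph_ext (Rfun d n (S s) (T s) s) w))
              (sph_ext (h2 (d 1) (d n)) w) < \<epsilon>"
      using part1_some[OF r e] part1_none[OF e] by eventually_elim auto
    show "\<forall>\<^sub>F s in at_right 0. \<forall>w.
        (w = None \<or> (\<exists>z. w = Some z \<and> norm z \<ge> r)) \<longrightarrow>
        cdist ((psi (z0 s) \<circ> sph_ext (Rfun d n (S s) (T s) s) \<circ> psi (z0 s))
                 ((psi (z0 s) \<circ> sph_ext (Rfun d n (S s) (T s) s) \<circ> psi (z0 s)) w))
              (sph_ext (h1 (d 1 * d n)) w) < \<epsilon>"
      using part2_some[OF r e] part2_none[OF e] evpos
    proof eventually_elim
      case (elim s)
      have nz: "z0 s \<noteq> 0" using elim by simp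
      show ?case using elim by (auto simp: psi_psi[OF nz])
    qed
  qed
qed

end
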